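(* Let $X\in\mathcal{L}_G^{1^*}(\Omega)$ and let $\{X_n\}_{n\ge1}$, $\{\tilde X_n\}_{n\ge1}$ be two sequences in $L^1_G(\Omega)$ with $X_n\downarrow X$ q.s. and $\tilde X_n\downarrow X$ q.s. Then for each $t\ge0$, \[\lim_{n\to\infty}\hat{\mathbb{E}}_t[X_n]=\lim_{n\to\infty}\hat{\mathbb{E}}_t[\tilde X_n]\quad\text{q.s.}\]
   Context: $\Omega=C_0^d(\mathbb{R}^+)$ is the space of continuous paths $\omega:[0,\infty)\to\mathbb{R}^d$ with $\omega_0=0$ (topology of uniform convergence on compacts), $B_t(\omega)=\omega_t$, $\mathcal F=\mathcal B(\Omega)$, $G:\mathbb{S}_d\to\mathbb{R}$ a monotone sublinear function on symmetric matrices, $\hat{\mathbb{E}}$ the $G$-expectation (under which $B$ is a $G$-Brownian motion) with conditional $G$-expectations $\hat{\mathbb{E}}_t$. $L^1_G(\Omega)$ (resp. $L^1_G(\Omega_t)$) is the completion of the bounded Lipschitz cylinder functions $\varphi(B_{t_1},\dots,B_{t_n})$ (resp. with $t_i\le t$) under $\hat{\mathbb{E}}[|\cdot|]$; $\hat{\mathbb{E}}_t:L^1_G(\Omega)\to L^1_G(\Omega_t)$ is the continuous extension. $\mathcal{P}$ is a weakly compact set of probability measures with $\hat{\mathbb{E}}[X]=\sup_{P\in\mathcal{P}}E_P[X]$ on cylinder functions, $c(A)=\sup_{P\in\mathcal{P}}P(A)$, q.s. means outside a set of capacity zero. $L^0(\Omega)$ is the set of $\mathcal{B}(\Omega)$-measurable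 maps $\Omega\to[-\infty,\infty]$, and $\mathcal{L}_G^{1^*}(\Omega)=\{X\in L^0(\Omega):\exists X_n\in L^1_G(\Omega),\ X_n\downarrow X\text{ q.s.}\}$. *)

theory Defs
  imports "HOL-Probability.Probability"
begin

text \<open>Canonical space: continuous paths in R^d started at 0 (extended by 0 to negative times),
  B_t(w) = w t.\<close>

type_synonym 'd path = "real \<Rightarrow> real^'d"

definition Omega :: "('d::finite) path set" where
  "Omega = {w. continuous_on UNIV w \<and> (\<forall>t\<le>0. w t = 0)}"

text \<open>Metric of uniform convergence on compacts.\<close>
definition path_dist :: "('d::finite) path \<Rightarrow> 'd path \<Rightarrow> real" where
  "path_dist w w' = (\<Sum>k. (1/2) ^ Suc k * min 1 (SUP t\<in>{0..real (Suc k)}. norm (w t - w' t)))"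

definition Omega_open :: "('d::finite) path set \<Rightarrow> bool" where
  "Omega_open U \<longleftrightarrow> U \<subseteq> Omega \<and>
     (\<forall>w\<in>U. \<exists>e>0. \<forall>w'\<in>Omega. path_dist w w' < e \<longrightarrow> w' \<in> U)"

definition Omega_borel :: "('d::finite) path measure" where
  "Omega_borel = sigma Omega (Collect Omega_open)"

definition bcont :: "(('d::finite) path \<Rightarrow> real) \<Rightarrow> bool" where
  "bcont f \<longleftrightarrow> (\<exists>M. \<forall>w\<in>Omega. \<bar>f w\<bar> \<le> M) \<and>
     (\<forall>w\<in>Omega. \<forall>e>0. \<exists>d>0. \<forall>w'\<in>Omega. path_dist w w' < d \<longrightarrow> \<bar>f w' - f w\<bar> < e)"

definition weak_conv :: "(nat \<Rightarrow> ('d::finite) path measure) \<Rightarrow> 'd path measure \<Rightarrow> bool" where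
  "weak_conv Ps P \<longleftrightarrow> (\<forall>f. bcont f \<longrightarrow> (\<lambda>n. \<integral>w. f w \<partial>Ps n) \<longlonglongrightarrow> (\<integral>w. f w \<partial>P))"

definition weakly_compact :: "('d::finite) path measure set \<Rightarrow> bool" where
  "weakly_compact PP \<longleftrightarrow> (\<forall>Ps::nat \<Rightarrow> _. (\<forall>n. Ps n \<in> PP) \<longrightarrow>
      (\<exists>r P. strict_mono r \<and> P \<in> PP \<and> weak_conv (Ps \<circ> r) P))"

definition prob_family :: "('d::finite) path measure set \<Rightarrow> bool" where
  "prob_family PP \<longleftrightarrow> (\<forall>P\<in>PP. prob_space P \<and> sets P = sets Omega_borel \<and> space P = Omega)"

definition cap :: "('d::finite) path measure set \<Rightarrow> 'd path set \<Rightarrow> real" where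
  "cap PP A = (SUP P\<in>PP. measure P A)"

definition qs :: "('d::finite) path measure set \<Rightarrow> ('d path \<Rightarrow> bool) \<Rightarrow> bool" where
  "qs PP Q \<longleftrightarrow> (\<exists>A\<in>sets Omega_borel. cap PP A = 0 \<and> (\<forall>w\<in>Omega - A. Q w))"

definition upE :: "('d::finite) path measure set \<Rightarrow> ('d path \<Rightarrow> ennreal) \<Rightarrow> ennreal" where
  "upE PP f = (SUP P\<in>PP. \<integral>\<^sup>+ w. f w \<partial>P)"

text \<open>Cylinder functions phi(B_{t_1},...,B_{t_n}); phi acts on the first n arguments.\<close>
definition cyl :: "nat \<Rightarrow> (nat \<Rightarrow> real) \<Rightarrow> ((nat \<Rightarrow> real^'d) \<Rightarrow> real) \<Rightarrow> ('d::finite) path \<Rightarrow> real" where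
  "cyl n ts phi w = phi (\<lambda>i. if i < n then w (ts i) else 0)"

definition blip_fun :: "nat \<Rightarrow> ((nat \<Rightarrow> real^'d::finite) \<Rightarrow> real) \<Rightarrow> bool" where
  "blip_fun n phi \<longleftrightarrow> (\<exists>M. \<forall>x. \<bar>phi x\<bar> \<le> M) \<and>
     (\<exists>L. \<forall>x y. \<bar>phi x - phi y\<bar> \<le> L * (\<Sum>i<n. norm (x i - y i)))"

definition clip_fun :: "nat \<Rightarrow> ((nat \<Rightarrow> real^'d::finite) \<Rightarrow> real) \<Rightarrow> bool" where
  "clip_fun n phi \<longleftrightarrow> (\<exists>C (m::nat). \<forall>x y. \<bar>phi x - phi y\<bar> \<le>
      C * (1 + (\<Sum>i<n. norm (x i)) ^ m + (\<Sum>i<n. norm (y i)) ^ m) * (\<Sum>i<n. norm (x i - y i)))"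

definition bLip_cyl :: "real set \<Rightarrow> (('d::finite) path \<Rightarrow> real) set" where
  "bLip_cyl T = {X. \<exists>n ts phi. (\<forall>i<n. ts i \<in> T) \<and> blip_fun n phi \<and> X = cyl n ts phi}"

definition Lip_cyl :: "(('d::finite) path \<Rightarrow> real) set" where
  "Lip_cyl = {X. \<exists>n ts phi. (\<forall>i<n. ts i \<ge> 0) \<and> clip_fun n phi \<and> X = cyl n ts phi}"

definition sublinear_exp :: "((('d::finite) path \<Rightarrow> real) \<Rightarrow> real) \<Rightarrow> bool" where
  "sublinear_exp E \<longleftrightarrow>
    (\<forall>X\<in>Lip_cyl. \<forall>Y\<in>Lip_cyl. (\<forall>w\<in>Omega. X w \<le> Y w) \<longrightarrow> E X \<le> E Y) \<and>
    (\<forall>c. E (\<lambda>_. c) = c) \<and>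
    (\<forall>X\<in>Lip_cyl. \<forall>Y\<in>Lip_cyl. E (\<lambda>w. X w + Y w) \<le> E X + E Y) \<and>
    (\<forall>X\<in>Lip_cyl. \<forall>l\<ge>0. E (\<lambda>w. l * X w) = l * E X)"

definition G_BM :: "((real^'d^'d) \<Rightarrow> real) \<Rightarrow> ((('d::finite) path \<Rightarrow> real) \<Rightarrow> real) \<Rightarrow> bool" where
  "G_BM G E \<longleftrightarrow>
    (\<forall>t\<ge>0. \<forall>s\<ge>0. \<forall>phi. clip_fun 1 phi \<longrightarrow>
        E (\<lambda>w. phi (\<lambda>i. if i = 0 then w (t + s) - w t else 0)) =
        E (\<lambda>w. phi (\<lambda>i. if i = 0 then w s else 0))) \<and>
    (\<forall>t\<ge>0. \<forall>s\<ge>0. \<forall>n ts phi. (\<forall>i<n. ts i \<in> {0..t}) \<and> clip_fun (Suc n) phi \<longrightarrow>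
        E (\<lambda>w. phi (\<lambda>i. if i < n then w (ts i) else if i = n then w (t + s) - w t else 0)) =
        E (\<lambda>w. (\<lambda>x. E (\<lambda>w'. phi (\<lambda>i. if i < n then x i else if i = n then w' (t + s) - w' t else 0)))
                 (\<lambda>i. if i < n then w (ts i) else 0))) \<and>
    (\<forall>t\<ge>0. \<forall>a. E (\<lambda>w. a \<bullet> w t) = 0 \<and> E (\<lambda>w. - (a \<bullet> w t)) = 0) \<and>
    ((\<lambda>t. E (\<lambda>w. norm (w t) ^ 3) / t) \<longlongrightarrow> 0) (at_right 0) \<and>
    (\<forall>A. transpose A = A \<longrightarrow> G A = 1/2 * E (\<lambda>w. w 1 \<bullet> (A *v w 1)))"

definition monotone_sublinear_G :: "((real^'d^'d) \<Rightarrow> real) \<Rightarrow> bool" where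
  "monotone_sublinear_G G \<longleftrightarrow>
    (\<forall>A B. transpose A = A \<and> transpose B = B \<longrightarrow>
       G (A + B) \<le> G A + G B \<and>
       ((\<forall>x. x \<bullet> (A *v x) \<le> x \<bullet> (B *v x)) \<longrightarrow> G A \<le> G B)) \<and>
    (\<forall>A l. transpose A = A \<and> l \<ge> 0 \<longrightarrow> G (l *\<^sub>R A) = l * G A)"

definition G_setting :: "((real^'d^'d) \<Rightarrow> real) \<Rightarrow> ((('d::finite) path \<Rightarrow> real) \<Rightarrow> real)
    \<Rightarrow> 'd path measure set \<Rightarrow> bool" where
  "G_setting G E PP \<longleftrightarrow> monotone_sublinear_G G \<and> sublinear_exp E \<and> G_BM G E \<and>
     prob_family PP \<and> weakly_compact PP \<and>
     (\<forall>X\<in>bLip_cyl {0..}. E X = (SUP P\<in>PP. \<integral>w. X w \<partial>P))"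

text \<open>L^1_G(Omega_T): closure (under E[|.|] = sup_P E_P|.|) of bounded Lipschitz cylinder functions.\<close>
definition L1G :: "('d::finite) path measure set \<Rightarrow> real set \<Rightarrow> ('d path \<Rightarrow> real) set" where
  "L1G PP T = {X. X \<in> borel_measurable Omega_borel \<and>
     (\<exists>Xk. (\<forall>k. Xk k \<in> bLip_cyl T) \<and>
        (\<lambda>k. upE PP (\<lambda>w. ennreal \<bar>Xk k w - X w\<bar>)) \<longlonglongrightarrow> 0)}"

definition decr_qs :: "('d::finite) path measure set \<Rightarrow> (nat \<Rightarrow> 'd path \<Rightarrow> real) \<Rightarrow> ('d path \<Rightarrow> ereal) \<Rightarrow> bool" where
  "decr_qs PP Xn X \<longleftrightarrow> qs PP (\<lambda>w. (\<forall>n. Xn (Suc n) w \<le> Xn n w) \<and> (\<lambda>n. ereal (Xn n w)) \<longlonglongrightarrow> X w)"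

definition L1G_star :: "('d::finite) path measure set \<Rightarrow> ('d path \<Rightarrow> ereal) set" where
  "L1G_star PP = {X. X \<in> borel_measurable Omega_borel \<and>
      (\<exists>Xn. (\<forall>n. Xn n \<in> L1G PP {0..}) \<and> decr_qs PP Xn X)}"

text \<open>Conditional G-expectation of a bounded Lipschitz cylinder function (Peng):
  for X = phi(B_{s_1},...,B_{s_m}, B_{r_1}-B_t,...,B_{r_k}-B_t), s_i <= t <= r_j,
  E_t[X] = psi(B_{s_1},...,B_{s_m}) with psi(x) = E[phi(x, B_{r_1}-B_t,...,B_{r_k}-B_t)].\<close>
definition cond_cyl :: "((('d::finite) path \<Rightarrow> real) \<Rightarrow> real) \<Rightarrow> real \<Rightarrow> ('d path \<Rightarrow> real) \<Rightarrow> ('d path \<Rightarrow> real) \<Rightarrow> bool" where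
  "cond_cyl E t X Y \<longleftrightarrow> (\<exists>m k s r phi.
     (\<forall>i<m. s i \<in> {0..t}) \<and> (\<forall>j<k. t \<le> r j) \<and> blip_fun (m + k) phi \<and>
     (\<forall>w\<in>Omega. X w = phi (\<lambda>i. if i < m then w (s i) else if i < m + k then w (r (i - m)) - w t else 0)) \<and>
     (\<forall>w\<in>Omega. Y w = E (\<lambda>w'. phi (\<lambda>i. if i < m then w (s i)
                                       else if i < m + k then w' (r (i - m)) - w' t else 0))))"

text \<open>Y is (a version of) E_t[X] for X in L^1_G(Omega): continuous extension of E_t.\<close>
definition cond_exp :: "((('d::finite) path \<Rightarrow> real) \<Rightarrow> real) \<Rightarrow> 'd path measure set \<Rightarrow> real
    \<Rightarrow> ('d path \<Rightarrow> real) \<Rightarrow> ('d path \<Rightarrow> real) \<Rightarrow> bool" where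
  "cond_exp E PP t X Y \<longleftrightarrow> X \<in> L1G PP {0..} \<and> Y \<in> borel_measurable Omega_borel \<and>
     (\<exists>Xk Yk. (\<forall>k. Xk k \<in> bLip_cyl {0..} \<and> cond_cyl E t (Xk k) (Yk k)) \<and>
        (\<lambda>k. upE PP (\<lambda>w. ennreal \<bar>Xk k w - X w\<bar>)) \<longlonglongrightarrow> 0 \<and>
        (\<lambda>k. upE PP (\<lambda>w. ennreal \<bar>Yk k w - Y w\<bar>)) \<longlonglongrightarrow> 0)"

end

theory Submission
  imports Defs
begin

definition EL :: "real set \<Rightarrow> (('d::finite) path \<Rightarrow> real) \<Rightarrow> bool" where
  "EL T X \<longleftrightarrow> finite T \<and> (\<exists>M. \<forall>w. \<bar>X w\<bar> \<le> M) \<and>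
     (\<exists>L\<ge>0. \<forall>w w'. \<bar>X w - X w'\<bar> \<le> L * (\<Sum>s\<in>T. norm (w s - w' s)))"

lemma ELI:
  assumes "finite T" "\<And>w. \<bar>X w\<bar> \<le> M" "L \<ge> 0"
    "\<And>w w'. \<bar>X w - X w'\<bar> \<le> L * (\<Sum>s\<in>T. norm (w s - w' s))"
  shows "EL T X"
  unfolding EL_def using assms by blast

lemma EL_mono:
  assumes "EL T X" "T \<subseteq> T'" "finite T'"
  shows "EL T' X"
proof -
  obtain L where L: "L \<ge> 0" "\<forall>w w'. \<bar>X w - X w'\<bar> \<le> L * (\<Sum>s\<in>T. norm (w s - w' s))"
    using assms(1) unfolding EL_def by blast
  have "\<bar>X w - X w'\<bar> \<le> L * (\<Sum>s\<in>T'. norm (w s - w' s))" for w w'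
  proof -
    have "(\<Sum>s\<in>T. norm (w s - w' s)) \<le> (\<Sum>s\<in>T'. norm (w s - w' s))"
      by (rule sum_mono2) (use assms in auto)
    then show ?thesis using L by (meson mult_left_mono order_trans)
  qed
  then show ?thesis using assms L unfolding EL_def by blast
qed

lemma EL_zero_dist:
  assumes "EL T X" "\<forall>s\<in>T. a s = b s"
  shows "X a = X b"
proof -
  obtain L where L: "\<forall>w w'. \<bar>X w - X w'\<bar> \<le> L * (\<Sum>s\<in>T. norm (w s - w' s))"
    using assms(1) unfolding EL_def by blast
  have "(\<Sum>s\<in>T. norm (a s - b s)) = 0" using assms(2) by simp
  then show ?thesis using L[rule_format, of a b] by simp
qed

lemma EL_bounded: "EL T X \<Longrightarrow> \<exists>M. \<forall>w. \<bar>X w\<bar> \<le> M"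
  unfolding EL_def by blast

lemma EL_const: "EL {} (\<lambda>_. c)"
  unfolding EL_def by auto

lemma EL_diff:
  assumes "EL T f" "EL T g" shows "EL T (\<lambda>w. f w - g w)"
proof -
  obtain M1 L1 where 1: "\<forall>w. \<bar>f w\<bar> \<le> M1" "L1 \<ge> 0" "\<forall>w w'. \<bar>f w - f w'\<bar> \<le> L1 * (\<Sum>s\<in>T. norm (w s - w' s))"
    using assms(1) unfolding EL_def by blast
  obtain M2 L2 where 2: "\<forall>w. \<bar>g w\<bar> \<le> M2" "L2 \<ge> 0" "\<forall>w w'. \<bar>g w - g w'\<bar> \<le> L2 * (\<Sum>s\<in>T. norm (w s - w' s))"
    using assms(2) unfolding EL_def by blast
  have "\<forall>w. \<bar>f w - g w\<bar> \<le> M1 + M2"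
  proof
    fix w show "\<bar>f w - g w\<bar> \<le> M1 + M2" using 1(1)[rule_format, of w] 2(1)[rule_format, of w] by linarith
  qed
  moreover have "\<forall>w w'. \<bar>(f w - g w) - (f w' - g w')\<bar> \<le> (L1 + L2) * (\<Sum>s\<in>T. norm (w s - w' s))"
  proof (intro allI)
    fix w w'
    have "\<bar>(f w - g w) - (f w' - g w')\<bar> \<le> \<bar>f w - f w'\<bar> + \<bar>g w - g w'\<bar>" by linarith
    also have "\<dots> \<le> (L1 + L2) * (\<Sum>s\<in>T. norm (w s - w' s))"
      using 1(3) 2(3) by (simp add: distrib_right add_mono)
    finally show "\<bar>(f w - g w) - (f w' - g w')\<bar> \<le> (L1 + L2) * (\<Sum>s\<in>T. norm (w s - w' s))" .
  qed
  moreover have "finite T" using assms unfolding EL_def by blast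
  ultimately show ?thesis using 1 2
    by (intro ELI[where M="M1+M2" and L="L1+L2"]) auto
qed

lemma EL_add:
  assumes "EL T f" "EL T g" shows "EL T (\<lambda>w. f w + g w)"
proof -
  have "EL T (\<lambda>w. - g w)" using EL_diff[OF EL_mono[OF EL_const[of 0], of T] assms(2)]
    using assms(1) unfolding EL_def by auto
  from EL_diff[OF assms(1) this] show ?thesis by simp
qed

lemma EL_constT: "finite T \<Longrightarrow> EL T (\<lambda>_. c)"
  using EL_mono[OF EL_const] by blast

lemma EL_max0:
  assumes "EL T f" shows "EL T (\<lambda>w. max (f w) 0)"
proof -
  obtain M1 L1 where 1: "\<forall>w. \<bar>f w\<bar> \<le> M1" "L1 \<ge> 0" "\<forall>w w'. \<bar>f w - f w'\<bar> \<le> L1 * (\<Sum>s\<in>T. norm (w s - w' s))"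
    using assms(1) unfolding EL_def by blast
  have "\<forall>w. \<bar>max (f w) 0\<bar> \<le> M1"
  proof
    fix w show "\<bar>max (f w) 0\<bar> \<le> M1" using 1(1)[rule_format, of w] by linarith
  qed
  moreover have "\<forall>w w'. \<bar>max (f w) 0 - max (f w') 0\<bar> \<le> L1 * (\<Sum>s\<in>T. norm (w s - w' s))"
  proof (intro allI)
    fix w w' show "\<bar>max (f w) 0 - max (f w') 0\<bar> \<le> L1 * (\<Sum>s\<in>T. norm (w s - w' s))"
      using 1(3)[rule_format, of w w'] by linarith
  qed
  ultimately show ?thesis using assms 1 unfolding EL_def by blast
qed

lemma EL_bLip:
  assumes "EL T X" "T \<subseteq> S"
  shows "X \<in> bLip_cyl S"
proof -
  have fin: "finite T" using assms unfolding EL_def by blast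
  obtain xs where xs: "set xs = T" "distinct xs" using finite_distinct_list[OF fin] by blast
  define n where "n = length xs"
  define ts where "ts = (\<lambda>i. xs ! i)"
  have bij: "bij_betw ts {..<n} T" unfolding ts_def n_def using xs by (intro bij_betw_nth) auto
  define idx where "idx = inv_into {..<n} ts"
  have bij2: "bij_betw idx T {..<n}" unfolding idx_def by (rule bij_betw_inv_into[OF bij])
  have idx1: "s \<in> T \<Longrightarrow> idx s < n \<and> ts (idx s) = s" for s
  proof -
    assume s: "s \<in> T"
    have "idx s \<in> {..<n}" using bij2 s by (auto dest: bij_betwE)
    moreover have "ts (idx s) = s" unfolding idx_def
      using s bij by (metis bij_betw_inv_into_right)
    ultimately show ?thesis by simp
  qed
  define phi where "phi = (\<lambda>z. X (\<lambda>s. if s \<in> T then z (idx s) else 0))"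
  obtain M L where HML: "\<forall>w. \<bar>X w\<bar> \<le> M" "L \<ge> 0" "\<forall>w w'. \<bar>X w - X w'\<bar> \<le> L * (\<Sum>s\<in>T. norm (w s - w' s))"
    using assms(1) unfolding EL_def by blast
  have eq: "X = cyl n ts phi"
  proof
    fix w
    show "X w = cyl n ts phi w" unfolding cyl_def phi_def
      by (rule EL_zero_dist[OF assms(1)]) (auto simp: idx1)
  qed
  have "blip_fun n phi" unfolding blip_fun_def
  proof (intro conjI)
    show "\<exists>M. \<forall>x. \<bar>phi x\<bar> \<le> M" using HML unfolding phi_def by blast
    show "\<exists>L. \<forall>x y. \<bar>phi x - phi y\<bar> \<le> L * (\<Sum>i<n. norm (x i - y i))"
    proof (intro exI allI)
      fix x y
      have "\<bar>phi x - phi y\<bar> \<le> L * (\<Sum>s\<in>T. norm ((if s \<in> T then x (idx s) else 0) - (if s \<in> T then y (idx s) else 0)))"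
        unfolding phi_def using HML(3) by blast
      also have "(\<Sum>s\<in>T. norm ((if s \<in> T then x (idx s) else 0) - (if s \<in> T then y (idx s) else 0)))
          = (\<Sum>s\<in>T. norm (x (idx s) - y (idx s)))" by (rule sum.cong) auto
      also have "\<dots> = (\<Sum>i<n. norm (x i - y i))"
        using sum.reindex_bij_betw[OF bij2, of "\<lambda>i. norm (x i - y i)"] by simp
      finally show "\<bar>phi x - phi y\<bar> \<le> L * (\<Sum>i<n. norm (x i - y i))" .
    qed
  qed
  moreover have "\<forall>i<n. ts i \<in> S" using bij assms(2) by (auto dest: bij_betwE)
  ultimately show ?thesis unfolding bLip_cyl_def using eq by blast
qed

lemma sum_le_card_sum:
  fixes g :: "real \<Rightarrow> real"
  assumes "finite T" "\<forall>i<n. ts i \<in> T" "\<forall>s. g s \<ge> 0"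
  shows "(\<Sum>i<n. g (ts i)) \<le> real n * (\<Sum>s\<in>T. g s)"
proof -
  have "(\<Sum>i<n. g (ts i)) \<le> (\<Sum>i<n. (\<Sum>s\<in>T. g s))"
    by (rule sum_mono) (use assms in \<open>auto intro!: member_le_sum\<close>)
  then show ?thesis by simp
qed

lemma bLip_EL:
  assumes "X \<in> bLip_cyl S"
  shows "\<exists>T. T \<subseteq> S \<and> EL T X"
proof -
  obtain n ts phi where X: "\<forall>i<n. ts i \<in> S" "blip_fun n phi" "X = cyl n ts phi"
    using assms unfolding bLip_cyl_def by blast
  obtain M L where HML: "\<forall>x. \<bar>phi x\<bar> \<le> M" "\<forall>x y. \<bar>phi x - phi y\<bar> \<le> L * (\<Sum>i<n. norm (x i - y i))"
    using X(2) unfolding blip_fun_def by blast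
  define T where "T = ts ` {..<n}"
  have fin: "finite T" unfolding T_def by simp
  have "\<bar>X a - X b\<bar> \<le> (max L 0 * real n) * (\<Sum>s\<in>T. norm (a s - b s))" for a b
  proof -
    have "\<bar>X a - X b\<bar> \<le> L * (\<Sum>i<n. norm ((if i < n then a (ts i) else 0) - (if i < n then b (ts i) else 0)))"
      unfolding X(3) cyl_def using HML(2) by blast
    also have "(\<Sum>i<n. norm ((if i < n then a (ts i) else 0) - (if i < n then b (ts i) else 0)))
        = (\<Sum>i<n. norm (a (ts i) - b (ts i)))" by (rule sum.cong) auto
    also have "L * \<dots> \<le> max L 0 * (\<Sum>i<n. norm (a (ts i) - b (ts i)))"
      by (rule mult_right_mono) (auto intro: sum_nonneg)
    also have "\<dots> \<le> max L 0 * (real n * (\<Sum>s\<in>T. norm (a s - b s)))"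
      by (rule mult_left_mono, rule sum_le_card_sum[where g="\<lambda>s. norm (a s - b s)"]) (auto simp: fin T_def)
    finally show ?thesis by (simp add: mult.assoc)
  qed
  moreover have "\<forall>w. \<bar>X w\<bar> \<le> M" unfolding X(3) cyl_def using HML by blast
  ultimately have "EL T X" using fin
    by (intro ELI[where M=M and L="max L 0 * real n"]) auto
  moreover have "T \<subseteq> S" unfolding T_def using X(1) by auto
  ultimately show ?thesis by blast
qed

lemma blip_clip: "blip_fun n phi \<Longrightarrow> clip_fun n phi"
proof -
  assume "blip_fun n phi"
  then obtain L where L: "\<forall>x y. \<bar>phi x - phi y\<bar> \<le> L * (\<Sum>i<n. norm (x i - y i))"
    unfolding blip_fun_def by blast
  have "\<bar>phi x - phi y\<bar> \<le> max L 0 * (1 + (\<Sum>i<n. norm (x i)) ^ 0 + (\<Sum>i<n. norm (y i)) ^ 0) * (\<Sum>i<n. norm (x i - y i))" for x y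
  proof -
    have s: "0 \<le> (\<Sum>i<n. norm (x i - y i))" by (auto intro: sum_nonneg)
    have "\<bar>phi x - phi y\<bar> \<le> L * (\<Sum>i<n. norm (x i - y i))" using L by blast
    also have "\<dots> \<le> (max L 0 * 3) * (\<Sum>i<n. norm (x i - y i))"
      by (rule mult_right_mono[OF _ s]) auto
    finally show ?thesis by simp
  qed
  then show "clip_fun n phi" unfolding clip_fun_def by blast
qed

lemma EL_Lip:
  assumes "EL T X" "T \<subseteq> {0..}" shows "X \<in> Lip_cyl"
proof -
  from EL_bLip[OF assms] obtain n ts phi where "\<forall>i<n. ts i \<in> {0..}" "blip_fun n phi" "X = cyl n ts phi"
    unfolding bLip_cyl_def by blast
  then show ?thesis unfolding Lip_cyl_def by (auto intro!: blip_clip)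
qed

definition ELp :: "(('d::finite) path \<Rightarrow> real) \<Rightarrow> bool" where
  "ELp f \<longleftrightarrow> (\<exists>T. T \<subseteq> {0..} \<and> EL T f)"

lemma ELpI: "EL T f \<Longrightarrow> T \<subseteq> {0..} \<Longrightarrow> ELp f"
  unfolding ELp_def by blast

lemma ELp_Lip: "ELp f \<Longrightarrow> f \<in> Lip_cyl"
  unfolding ELp_def using EL_Lip by blast

lemma ELp_bLip: "ELp f \<Longrightarrow> f \<in> bLip_cyl {0..}"
  unfolding ELp_def using EL_bLip by blast

lemma EL_finite: "EL T f \<Longrightarrow> finite T" unfolding EL_def by blast

lemma ELp_two:
  assumes "ELp f" "ELp g"
  obtains T where "T \<subseteq> {0..}" "EL T f" "EL T g"
proof -
  obtain T1 T2 where "T1 \<subseteq> {0..}" "EL T1 f" "T2 \<subseteq> {0..}" "EL T2 g" using assms unfolding ELp_def by blast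
  then show ?thesis using that[of "T1 \<union> T2"] EL_mono[of T1 f "T1 \<union> T2"] EL_mono[of T2 g "T1 \<union> T2"]
    by (auto dest: EL_finite)
qed

lemma ELp_diff: "ELp f \<Longrightarrow> ELp g \<Longrightarrow> ELp (\<lambda>w. f w - g w)"
  by (metis ELp_two ELpI EL_diff)
lemma ELp_add: "ELp f \<Longrightarrow> ELp g \<Longrightarrow> ELp (\<lambda>w. f w + g w)"
  by (metis ELp_two ELpI EL_add)
lemma ELp_const: "ELp (\<lambda>_. c)"
  using ELpI[OF EL_const] by blast
lemma ELp_max0: "ELp f \<Longrightarrow> ELp (\<lambda>w. max (f w) 0)"
  unfolding ELp_def using EL_max0 by blast
lemma ELp_bLipI: "f \<in> bLip_cyl {0..} \<Longrightarrow> ELp f"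
  unfolding ELp_def using bLip_EL by blast

lemma E_mono:
  assumes "sublinear_exp E" "ELp f" "ELp g" "\<forall>w\<in>Omega. f w \<le> g w"
  shows "E f \<le> E g"
  using assms ELp_Lip unfolding sublinear_exp_def by blast

lemma E_ext:
  assumes "sublinear_exp E" "ELp f" "ELp g" "\<forall>w\<in>Omega. f w = g w"
  shows "E f = E g"
  using E_mono[OF assms(1,2,3)] E_mono[OF assms(1,3,2)] assms(4) by force

lemma E_const: "sublinear_exp E \<Longrightarrow> E (\<lambda>_. c) = c"
  unfolding sublinear_exp_def by blast

lemma E_add:
  assumes "sublinear_exp E" "ELp f" "ELp g"
  shows "E (\<lambda>w. f w + g w) \<le> E f + E g"
  using assms ELp_Lip unfolding sublinear_exp_def by blast

lemma E_lip:
  assumes E: "sublinear_exp E" and "ELp f" "ELp g" "\<forall>w\<in>Omega. \<bar>f w - g w\<bar> \<le> c"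
  shows "\<bar>E f - E g\<bar> \<le> c"
proof -
  have "E f \<le> E (\<lambda>w. g w + c)"
    using assms by (intro E_mono ELp_add ELp_const) auto
  also have "\<dots> \<le> E g + E (\<lambda>_. c)" using assms by (intro E_add ELp_const) auto
  finally have 1: "E f \<le> E g + c" using E_const[OF E] by simp
  have "E g \<le> E (\<lambda>w. f w + c)"
    using assms by (intro E_mono ELp_add ELp_const) auto
  also have "\<dots> \<le> E f + E (\<lambda>_. c)" using assms by (intro E_add ELp_const) auto
  finally have 2: "E g \<le> E f + c" using E_const[OF E] by simp
  from 1 2 show ?thesis by linarith
qed

definition cat :: "real \<Rightarrow> ('d::finite) path \<Rightarrow> 'd path \<Rightarrow> 'd path" where
  "cat t w v = (\<lambda>s. w (min s t) + (v (max s t) - v t))"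

definition Et :: "((('d::finite) path \<Rightarrow> real) \<Rightarrow> real) \<Rightarrow> real \<Rightarrow> ('d path \<Rightarrow> real) \<Rightarrow> 'd path \<Rightarrow> real" where
  "Et E t X = (\<lambda>w. E (\<lambda>v. X (cat t w v)))"

lemma cat_Omega:
  assumes "t \<ge> 0" "w \<in> Omega" "v \<in> Omega"
  shows "cat t w v \<in> Omega"
proof -
  have cw: "continuous_on UNIV w" and cv: "continuous_on UNIV v" using assms unfolding Omega_def by auto
  have "continuous_on UNIV (\<lambda>s. w (min s t))"
    by (rule continuous_on_compose2[OF cw]) (auto intro!: continuous_intros)
  moreover have "continuous_on UNIV (\<lambda>s. v (max s t))"
    by (rule continuous_on_compose2[OF cv]) (auto intro!: continuous_intros)
  ultimately have "continuous_on UNIV (cat t w v)" unfolding cat_def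
    by (intro continuous_intros) auto
  moreover have "\<forall>s\<le>0. cat t w v s = 0"
  proof (intro allI impI)
    fix s :: real assume "s \<le> 0"
    then have "min s t = s" "max s t = t" using assms by auto
    then show "cat t w v s = 0" unfolding cat_def using assms \<open>s \<le> 0\<close> unfolding Omega_def by auto
  qed
  ultimately show ?thesis unfolding Omega_def by auto
qed

lemma EL_cat_right:
  assumes "EL T X"
  shows "EL ({s\<in>T. s > t} \<union> {t}) (\<lambda>v. X (cat t w v))"
proof -
  obtain M L where HM: "\<forall>w. \<bar>X w\<bar> \<le> M" "L \<ge> 0" "\<forall>w w'. \<bar>X w - X w'\<bar> \<le> L * (\<Sum>s\<in>T. norm (w s - w' s))"
    using assms unfolding EL_def by blast
  have fin: "finite T" using assms by (rule EL_finite)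
  define T' where "T' = {s\<in>T. s > t} \<union> {t}"
  have finT': "finite T'" unfolding T'_def using fin by auto
  show ?thesis unfolding T'_def[symmetric]
  proof (rule ELI[OF finT', where M=M and L="L * (real (card T) * 2)"])
    show "\<bar>X (cat t w v)\<bar> \<le> M" for v using HM by blast
    show "0 \<le> L * (real (card T) * 2)" using HM by auto
    fix a b
    have hterm: "norm (cat t w a s - cat t w b s) \<le> 2 * (\<Sum>s\<in>T'. norm (a s - b s))" if "s \<in> T" for s
    proof (cases "s \<le> t")
      case True
      then show ?thesis unfolding cat_def by (auto intro: sum_nonneg)
    next
      case False
      then have "s \<in> T'" "t \<in> T'" using that unfolding T'_def by auto
      then have 1: "norm (a s - b s) \<le> (\<Sum>s\<in>T'. norm (a s - b s))" and 2: "norm (a t - b t) \<le> (\<Sum>s\<in>T'. norm (a s - b s))"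
        using finT' by (auto intro!: member_le_sum)
      have "cat t w a s - cat t w b s = (a s - b s) - (a t - b t)" using False unfolding cat_def
        by (auto simp: max_def min_def)
      then have "norm (cat t w a s - cat t w b s) \<le> norm (a s - b s) + norm (a t - b t)"
        by (metis norm_triangle_ineq4)
      then show ?thesis using 1 2 by linarith
    qed
    have "\<bar>X (cat t w a) - X (cat t w b)\<bar> \<le> L * (\<Sum>s\<in>T. norm (cat t w a s - cat t w b s))"
      using HM by blast
    also have "(\<Sum>s\<in>T. norm (cat t w a s - cat t w b s)) \<le> real (card T) * (2 * (\<Sum>s\<in>T'. norm (a s - b s)))"
      using hterm by (intro sum_bounded_above) auto
    then have "L * (\<Sum>s\<in>T. norm (cat t w a s - cat t w b s)) \<le> L * (real (card T) * (2 * (\<Sum>s\<in>T'. norm (a s - b s))))"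
      using HM by (intro mult_left_mono) auto
    finally show "\<bar>X (cat t w a) - X (cat t w b)\<bar> \<le> L * (real (card T) * 2) * (\<Sum>s\<in>T'. norm (a s - b s))"
      by (simp add: algebra_simps)
  qed
qed

lemma ELp_cat_right:
  assumes "EL T X" "T \<subseteq> {0..}" "t \<ge> 0"
  shows "ELp (\<lambda>v. X (cat t w v))"
  using assms by (intro ELpI[OF EL_cat_right[OF assms(1)]]) auto

lemma EL_Et:
  fixes X :: "('d::finite) path \<Rightarrow> real"
  assumes E: "sublinear_exp E" and X: "EL T X" "T \<subseteq> {0..}" and t: "t \<ge> 0"
  shows "EL ({s\<in>T. s \<le> t} \<union> {t}) (Et E t X)"
proof -
  obtain M L where HM: "\<forall>w. \<bar>X w\<bar> \<le> M" "L \<ge> 0" "\<forall>w w'. \<bar>X w - X w'\<bar> \<le> L * (\<Sum>s\<in>T. norm (w s - w' s))"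
    using X unfolding EL_def by blast
  have fin: "finite T" using X by (intro EL_finite)
  define T' where "T' = {s\<in>T. s \<le> t} \<union> {t}"
  have finT': "finite T'" unfolding T'_def using fin by auto
  have ELc: "ELp (\<lambda>v. X (cat t w v))" for w using ELp_cat_right[OF X t] .
  show ?thesis unfolding T'_def[symmetric]
  proof (rule ELI[OF finT', where M=M and L="L * real (card T)"])
    fix w
    have "\<bar>E (\<lambda>v. X (cat t w v)) - E (\<lambda>_. 0)\<bar> \<le> M"
      using HM by (intro E_lip[OF E ELc ELp_const]) auto
    then show "\<bar>Et E t X w\<bar> \<le> M" unfolding Et_def using E_const[OF E] by simp
  next
    show "0 \<le> L * real (card T)" using HM by auto
  next
    fix a b :: "'d path"
    have hterm: "norm (cat t a v s - cat t b v s) \<le> (\<Sum>s\<in>T'. norm (a s - b s))" if "s \<in> T" for s v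
    proof -
      have "min s t \<in> T'" using that unfolding T'_def by (auto simp: min_def)
      then have "norm (a (min s t) - b (min s t)) \<le> (\<Sum>s\<in>T'. norm (a s - b s))"
        using finT' by (auto intro!: member_le_sum)
      moreover have "cat t a v s - cat t b v s = a (min s t) - b (min s t)" unfolding cat_def by simp
      ultimately show ?thesis by simp
    qed
    have "\<forall>v\<in>Omega. \<bar>X (cat t a v) - X (cat t b v)\<bar> \<le> L * (real (card T) * (\<Sum>s\<in>T'. norm (a s - b s)))"
    proof
      fix v
      have "\<bar>X (cat t a v) - X (cat t b v)\<bar> \<le> L * (\<Sum>s\<in>T. norm (cat t a v s - cat t b v s))"
        using HM by blast
      also have "(\<Sum>s\<in>T. norm (cat t a v s - cat t b v s)) \<le> real (card T) * (\<Sum>s\<in>T'. norm (a s - b s))"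
        using hterm by (intro sum_bounded_above) auto
      then have "L * (\<Sum>s\<in>T. norm (cat t a v s - cat t b v s)) \<le> L * (real (card T) * (\<Sum>s\<in>T'. norm (a s - b s)))"
        using HM by (intro mult_left_mono) auto
      finally show "\<bar>X (cat t a v) - X (cat t b v)\<bar> \<le> L * (real (card T) * (\<Sum>s\<in>T'. norm (a s - b s)))" .
    qed
    from E_lip[OF E ELc ELc this] show "\<bar>Et E t X a - Et E t X b\<bar> \<le> L * real (card T) * (\<Sum>s\<in>T'. norm (a s - b s))"
      unfolding Et_def by (simp add: mult.assoc)
  qed
qed

lemma ELp_Et:
  assumes E: "sublinear_exp E" and X: "ELp X" and t: "t \<ge> 0"
  shows "ELp (Et E t X)"
proof -
  obtain T where "T \<subseteq> {0..}" "EL T X" using X unfolding ELp_def by blast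
  then show ?thesis using EL_Et[OF E _ _ t] t by (intro ELpI[of "{s\<in>T. s \<le> t} \<union> {t}"]) auto
qed

lemma G_BM_clause2:
  assumes "G_BM G E"
  shows "\<forall>t\<ge>0. \<forall>s\<ge>0. \<forall>n ts phi. (\<forall>i<n. ts i \<in> {0..t}) \<and> clip_fun (Suc n) phi \<longrightarrow>
        E (\<lambda>w. phi (\<lambda>i. if i < n then w (ts i) else if i = n then w (t + s) - w t else 0)) =
        E (\<lambda>w. (\<lambda>x. E (\<lambda>w'. phi (\<lambda>i. if i < n then x i else if i = n then w' (t + s) - w' t else 0)))
                 (\<lambda>i. if i < n then w (ts i) else 0))"
  using assms unfolding G_BM_def by blast

lemma single_tower:
  fixes X :: "('d::finite) path \<Rightarrow> real"
  assumes E: "sublinear_exp E" and G: "G_BM G E" and X: "EL T X"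
    and T: "T \<subseteq> {0..t'} \<union> {r}" and t': "t' \<ge> 0" and r: "r > t'"
  shows "E X = E (Et E t' X)"
proof -
  have fin: "finite T" using X by (rule EL_finite)
  define T2 where "T2 = (T - {r}) \<union> {t'}"
  have finT2: "finite T2" unfolding T2_def using fin by auto
  have T2sub: "T2 \<subseteq> {0..t'}" unfolding T2_def using T t' by auto
  have rT2: "r \<notin> T2" using T2sub r by auto
  obtain xs where xs: "set xs = T2" "distinct xs" using finite_distinct_list[OF finT2] by blast
  define n where "n = length xs"
  define ts where "ts = (\<lambda>i. xs ! i)"
  have bij: "bij_betw ts {..<n} T2" unfolding ts_def n_def using xs by (intro bij_betw_nth) auto
  define idx where "idx = inv_into {..<n} ts"
  have bij2: "bij_betw idx T2 {..<n}" unfolding idx_def by (rule bij_betw_inv_into[OF bij])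
  have idx1: "idx s < n \<and> ts (idx s) = s" if s: "s \<in> T2" for s
  proof -
    have "idx s \<in> {..<n}" using bij2 s by (auto dest: bij_betwE)
    moreover have "ts (idx s) = s" unfolding idx_def
      using s bij by (metis bij_betw_inv_into_right)
    ultimately show ?thesis by simp
  qed
  have t'T2: "t' \<in> T2" unfolding T2_def by simp
  have tsin: "\<forall>i<n. ts i \<in> {0..t'}"
  proof (intro allI impI)
    fix i assume "i < n"
    then have "ts i \<in> T2" using bij by (auto simp: bij_betw_def)
    then show "ts i \<in> {0..t'}" using T2sub by blast
  qed
  have sT: "s \<in> T \<Longrightarrow> s \<noteq> r \<Longrightarrow> s \<in> T2 \<and> s \<le> t'" for s using T unfolding T2_def by auto
  define phi where "phi = (\<lambda>z. X (\<lambda>s. if s = r then z (idx t') + z n else if s \<in> T2 then z (idx s) else 0))"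
  obtain M L where HM: "\<forall>w. \<bar>X w\<bar> \<le> M" "L \<ge> 0" "\<forall>w w'. \<bar>X w - X w'\<bar> \<le> L * (\<Sum>s\<in>T. norm (w s - w' s))"
    using X unfolding EL_def by blast
  have "blip_fun (Suc n) phi" unfolding blip_fun_def
  proof (intro conjI)
    show "\<exists>M. \<forall>x. \<bar>phi x\<bar> \<le> M" using HM unfolding phi_def by blast
    show "\<exists>L. \<forall>x y. \<bar>phi x - phi y\<bar> \<le> L * (\<Sum>i<Suc n. norm (x i - y i))"
    proof (intro exI allI)
      fix x y :: "nat \<Rightarrow> real^'d"
      define \<gamma> where "\<gamma> = (\<lambda>z::nat \<Rightarrow> real^'d. (\<lambda>s. if s = r then z (idx t') + z n else if s \<in> T2 then z (idx s) else 0))"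
      define S where "S = (\<Sum>i<Suc n. norm (x i - y i))"
      have mem: "i < Suc n \<Longrightarrow> norm (x i - y i) \<le> S" for i unfolding S_def by (rule member_le_sum) auto
      have hterm: "norm (\<gamma> x s - \<gamma> y s) \<le> 2 * S" if "s \<in> T" for s
      proof (cases "s = r")
        case True
        have "norm (\<gamma> x s - \<gamma> y s) = norm ((x (idx t') - y (idx t')) + (x n - y n))"
          unfolding \<gamma>_def using True by (simp add: algebra_simps)
        also have "\<dots> \<le> norm (x (idx t') - y (idx t')) + norm (x n - y n)" by (rule norm_triangle_ineq)
        also have "\<dots> \<le> 2 * S" using mem[of "idx t'"] mem[of n] idx1[OF t'T2] by simp
        finally show ?thesis .
      next
        case False
        then have "s \<in> T2" using sT that by blast
        then have "norm (\<gamma> x s - \<gamma> y s) = norm (x (idx s) - y (idx s))"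
          unfolding \<gamma>_def using False by simp
        also have "\<dots> \<le> S" using mem[of "idx s"] idx1[OF \<open>s \<in> T2\<close>] by simp
        finally show ?thesis using S_def by (smt (verit) sum_nonneg norm_ge_zero)
      qed
      have "\<bar>phi x - phi y\<bar> \<le> L * (\<Sum>s\<in>T. norm (\<gamma> x s - \<gamma> y s))"
        unfolding phi_def \<gamma>_def using HM by blast
      also have "(\<Sum>s\<in>T. norm (\<gamma> x s - \<gamma> y s)) \<le> real (card T) * (2 * S)"
        using hterm by (intro sum_bounded_above) auto
      then have "L * (\<Sum>s\<in>T. norm (\<gamma> x s - \<gamma> y s)) \<le> L * (real (card T) * (2 * S))"
        using HM by (intro mult_left_mono) auto
      finally show "\<bar>phi x - phi y\<bar> \<le> (L * real (card T) * 2) * (\<Sum>i<Suc n. norm (x i - y i))"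
        unfolding S_def by (simp add: algebra_simps)
    qed
  qed
  then have clip: "clip_fun (Suc n) phi" by (rule blip_clip)
  note main = G_BM_clause2[OF G, rule_format, of t' "r - t'" n ts phi]
  have eq1: "(\<lambda>w. phi (\<lambda>i. if i < n then w (ts i) else if i = n then w (t' + (r - t')) - w t' else 0)) = X"
  proof
    fix w
    show "phi (\<lambda>i. if i < n then w (ts i) else if i = n then w (t' + (r - t')) - w t' else 0) = X w"
      unfolding phi_def
    proof (rule EL_zero_dist[OF X], intro ballI)
      fix s assume s: "s \<in> T"
      show "(if s = r then (if idx t' < n then w (ts (idx t')) else if idx t' = n then w (t' + (r - t')) - w t' else 0)
            + (if n < n then w (ts n) else if n = n then w (t' + (r - t')) - w t' else 0)
           else if s \<in> T2 then (if idx s < n then w (ts (idx s)) else if idx s = n then w (t' + (r - t')) - w t' else 0) else 0) = w s"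
      proof (cases "s = r")
        case True then show ?thesis using idx1[OF t'T2] by simp
      next
        case False then show ?thesis using idx1 sT[OF s] by simp
      qed
    qed
  qed
  have eq2: "(\<lambda>w. (\<lambda>x. E (\<lambda>w'. phi (\<lambda>i. if i < n then x i else if i = n then w' (t' + (r - t')) - w' t' else 0)))
                 (\<lambda>i. if i < n then w (ts i) else 0)) = Et E t' X"
  proof
    fix w
    have "(\<lambda>w'. phi (\<lambda>i. if i < n then (if i < n then w (ts i) else 0) else if i = n then w' (t' + (r - t')) - w' t' else 0))
        = (\<lambda>w'. X (cat t' w w'))"
    proof
      fix w'
      show "phi (\<lambda>i. if i < n then (if i < n then w (ts i) else 0) else if i = n then w' (t' + (r - t')) - w' t' else 0) = X (cat t' w w')"
        unfolding phi_def
      proof (rule EL_zero_dist[OF X], intro ballI)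
        fix s assume s: "s \<in> T"
        show "(if s = r then (if idx t' < n then (if idx t' < n then w (ts (idx t')) else 0) else if idx t' = n then w' (t' + (r - t')) - w' t' else 0)
            + (if n < n then (if n < n then w (ts n) else 0) else if n = n then w' (t' + (r - t')) - w' t' else 0)
           else if s \<in> T2 then (if idx s < n then (if idx s < n then w (ts (idx s)) else 0) else if idx s = n then w' (t' + (r - t')) - w' t' else 0) else 0) = cat t' w w' s"
        proof (cases "s = r")
          case True then show ?thesis using idx1[OF t'T2] r unfolding cat_def by (simp add: min_def max_def)
        next
          case False then show ?thesis using idx1 sT[OF s] unfolding cat_def by (simp add: min_def max_def)
        qed
      qed
    qed
    then show "(\<lambda>x. E (\<lambda>w'. phi (\<lambda>i. if i < n then x i else if i = n then w' (t' + (r - t')) - w' t' else 0)))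
                 (\<lambda>i. if i < n then w (ts i) else 0) = Et E t' X w"
      unfolding Et_def by simp
  qed
  from main show ?thesis using tsin clip t' r eq1 eq2 by simp
qed

lemma cat_cat:
  assumes "t \<le> t'"
  shows "cat t' (cat t w v) u = cat t w (cat t' v u)"
  unfolding cat_def using assms by (auto simp: min_def max_def fun_eq_iff)

lemma tower_aux:
  fixes X :: "('d::finite) path \<Rightarrow> real"
  assumes E: "sublinear_exp E" and G: "G_BM G E" and t: "t \<ge> 0"
  shows "EL T X \<Longrightarrow> T \<subseteq> {0..} \<Longrightarrow> card {s\<in>T. s > t} = k \<Longrightarrow> E X = E (Et E t X)"
proof (induction k arbitrary: T X)
  case 0
  have fin: "finite T" using 0 by (intro EL_finite)
  then have "{s\<in>T. s > t} = {}" using 0 by auto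
  then have le: "\<forall>s\<in>T. s \<le> t" by auto
  have "Et E t X = X"
  proof
    fix w
    have "(\<lambda>v. X (cat t w v)) = (\<lambda>v. X w)"
    proof
      fix v show "X (cat t w v) = X w"
        by (rule EL_zero_dist[OF 0(1)]) (use le in \<open>auto simp: cat_def min_def max_def\<close>)
    qed
    then show "Et E t X w = X w" unfolding Et_def using E_const[OF E] by simp
  qed
  then show ?case by simp
next
  case (Suc k)
  have X: "EL T X" and T0: "T \<subseteq> {0..}" using Suc by auto
  have fin: "finite T" using X by (intro EL_finite)
  define F where "F = {s\<in>T. s > t}"
  have finF: "finite F" unfolding F_def using fin by auto
  have cardF: "card F = Suc k" unfolding F_def using Suc by simp
  then have Fne: "F \<noteq> {}" by auto
  define r where "r = Max F"
  have rF: "r \<in> F" unfolding r_def using finF Fne by (rule Max_in)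
  have rmax: "s \<in> F \<Longrightarrow> s \<le> r" for s unfolding r_def using finF by simp
  define A where "A = {t} \<union> {s\<in>T. s < r}"
  have finA: "finite A" unfolding A_def using fin by auto
  define t' where "t' = Max A"
  have t'A: "t' \<in> A" unfolding t'_def using finA by (intro Max_in) (auto simp: A_def)
  have Amax: "s \<in> A \<Longrightarrow> s \<le> t'" for s unfolding t'_def using finA by simp
  have tt': "t \<le> t'" using Amax[of t] unfolding A_def by simp
  have rt: "t < r" using rF unfolding F_def by simp
  have t'r: "t' < r" using t'A rt unfolding A_def by auto
  have t'0: "t' \<ge> 0" using tt' t by simp
  have Tsub: "T \<subseteq> {0..t'} \<union> {r}"
  proof
    fix s assume s: "s \<in> T"
    consider "s < r" | "s = r" | "s > r" by linarith
    then show "s \<in> {0..t'} \<union> {r}"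
    proof cases
      case 1 then have "s \<le> t'" using Amax[of s] s unfolding A_def by simp
      then show ?thesis using s T0 by auto
    next
      case 3 then have "s \<in> F" using s rt unfolding F_def by auto
      then show ?thesis using rmax 3 by force
    qed simp
  qed
  have stepA: "E X = E (Et E t' X)" by (rule single_tower[OF E G X Tsub t'0 t'r])
  define T2 where "T2 = {s\<in>T. s \<le> t'} \<union> {t'}"
  have EL2: "EL T2 (Et E t' X)" unfolding T2_def by (rule EL_Et[OF E X T0 t'0])
  have T20: "T2 \<subseteq> {0..}" unfolding T2_def using T0 t'0 by auto
  have "{s\<in>T2. s > t} = F - {r}"
  proof
    show "{s\<in>T2. s > t} \<subseteq> F - {r}"
    proof
      fix s assume s: "s \<in> {s\<in>T2. s > t}"
      show "s \<in> F - {r}"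
      proof (cases "s = t'")
        case True
        then have "t' \<noteq> t" using s by auto
        then have "t' \<in> T" "t' < r" using t'A unfolding A_def by auto
        then show ?thesis using True s unfolding F_def by auto
      next
        case False
        then show ?thesis using s t'r unfolding T2_def F_def by auto
      qed
    qed
    show "F - {r} \<subseteq> {s\<in>T2. s > t}"
    proof
      fix s assume s: "s \<in> F - {r}"
      then have "s < r" using rmax by force
      then have "s \<le> t'" using Amax[of s] s unfolding A_def F_def by auto
      then show "s \<in> {s\<in>T2. s > t}" using s unfolding T2_def F_def by auto
    qed
  qed
  then have "card {s\<in>T2. s > t} = k" using cardF rF finF by simp
  then have stepB: "E (Et E t' X) = E (Et E t (Et E t' X))" using Suc.IH[OF EL2 T20] by simp
  have stepC: "Et E t (Et E t' X) = Et E t X"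
  proof
    fix w
    define Xw where "Xw = (\<lambda>v. X (cat t w v))"
    have ELw: "EL ({s\<in>T. s > t} \<union> {t}) Xw" unfolding Xw_def by (rule EL_cat_right[OF X])
    have Twsub: "{s\<in>T. s > t} \<union> {t} \<subseteq> {0..t'} \<union> {r}" using Tsub tt' t by auto
    have "E Xw = E (Et E t' Xw)" by (rule single_tower[OF E G ELw Twsub t'0 t'r])
    moreover have "Et E t (Et E t' X) w = E (Et E t' Xw)"
      unfolding Et_def Xw_def by (simp only: cat_cat[OF tt'])
    moreover have "Et E t X w = E Xw" unfolding Et_def Xw_def by simp
    ultimately show "Et E t (Et E t' X) w = Et E t X w" by simp
  qed
  show ?case using stepA stepB stepC by simp
qed

lemma tower:
  assumes E: "sublinear_exp E" and G: "G_BM G E" and t: "t \<ge> 0" and X: "ELp X"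
  shows "E X = E (Et E t X)"
  using X tower_aux[OF E G t] unfolding ELp_def by blast

lemma Omega_bdd:
  assumes "w \<in> Omega" "w' \<in> Omega"
  shows "bdd_above ((\<lambda>t. norm (w t - w' t)) ` {0..x})"
proof -
  have "continuous_on UNIV w" "continuous_on UNIV w'" using assms unfolding Omega_def by auto
  then have "continuous_on {0..x} (\<lambda>t. norm (w t - w' t))"
    by (intro continuous_intros) (auto intro: continuous_on_subset)
  then have "compact ((\<lambda>t. norm (w t - w' t)) ` {0..x})"
    by (intro compact_continuous_image) auto
  then show ?thesis by (intro bounded_imp_bdd_above compact_imp_bounded)
qed

lemma path_dist_term:
  assumes "w \<in> Omega" "w' \<in> Omega" "s \<in> {0..real (Suc k)}"
  shows "(1/2) ^ Suc k * min 1 (norm (w s - w' s)) \<le> path_dist w w'"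
proof -
  define f where "f = (\<lambda>k. (1/2::real) ^ Suc k * min 1 (SUP t\<in>{0..real (Suc k)}. norm (w t - w' t)))"
  have sup_ge: "norm (w u - w' u) \<le> (SUP t\<in>{0..real (Suc j)}. norm (w t - w' t))" if "u \<in> {0..real (Suc j)}" for u j
    by (rule cSUP_upper[OF that Omega_bdd[OF assms(1,2)]])
  have f0: "0 \<le> f j" for j
  proof -
    have "0 \<le> (SUP t\<in>{0..real (Suc j)}. norm (w t - w' t))"
      using sup_ge[of 0 j] by (smt (verit) norm_ge_zero atLeastAtMost_iff of_nat_0_le_iff)
    then show ?thesis unfolding f_def by simp
  qed
  have fle: "f j \<le> (1/2) ^ Suc j" for j unfolding f_def by (simp add: mult_left_le)
  have summ: "summable f"
    by (rule summable_comparison_test'[where g="\<lambda>j. (1/2::real) ^ Suc j"]) (use f0 fle in auto)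
  have "f k \<le> suminf f" using sum_le_suminf[OF summ, of "{k}"] f0 by simp
  moreover have "(1/2) ^ Suc k * min 1 (norm (w s - w' s)) \<le> f k"
    unfolding f_def using sup_ge[OF assms(3)] by (intro mult_left_mono) auto
  moreover have "path_dist w w' = suminf f" by (simp only: path_dist_def f_def)
  ultimately show ?thesis by linarith
qed

lemma eval_cont:
  assumes w: "w \<in> Omega" and s: "s \<ge> 0" and e: "e > 0"
  shows "\<exists>d>0. \<forall>w'\<in>Omega. path_dist w w' < d \<longrightarrow> norm (w' s - w s) < e"
proof -
  define k where "k = nat \<lceil>s\<rceil>"
  have sk: "s \<in> {0..real (Suc k)}" unfolding k_def using s by (simp; linarith)
  define d where "d = (1/2::real) ^ Suc k * min e 1"
  have "d > 0" unfolding d_def using e by simp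
  moreover have "norm (w' s - w s) < e" if w': "w' \<in> Omega" "path_dist w w' < d" for w'
  proof (rule ccontr)
    assume "\<not> norm (w' s - w s) < e"
    then have "min e 1 \<le> min 1 (norm (w s - w' s))" by (simp add: norm_minus_commute)
    then have "d \<le> (1/2) ^ Suc k * min 1 (norm (w s - w' s))" unfolding d_def by (intro mult_left_mono) auto
    also have "\<dots> \<le> path_dist w w'" by (rule path_dist_term[OF w w'(1) sk])
    finally show False using w'(2) by simp
  qed
  ultimately show ?thesis by blast
qed

lemma finite_delta:
  fixes P :: "'a \<Rightarrow> real \<Rightarrow> bool"
  assumes "finite T" "\<forall>s\<in>T. \<exists>d>0. \<forall>w'. P w' d \<longrightarrow> Q s w'"
    and mono: "\<And>w' d d'. P w' d \<Longrightarrow> d \<le> d' \<Longrightarrow> P w' d'"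
  shows "\<exists>d>0. \<forall>w'. P w' d \<longrightarrow> (\<forall>s\<in>T. Q s w')"
proof (cases "T = {}")
  case True then show ?thesis by (intro exI[of _ "1::real"]) auto
next
  case False
  from assms(2) obtain D where D: "\<forall>s\<in>T. D s > 0 \<and> (\<forall>w'. P w' (D s) \<longrightarrow> Q s w')" by metis
  define d where "d = Min (D ` T)"
  have "d > 0" unfolding d_def using D assms(1) False by auto
  moreover have "d \<le> D s" if "s \<in> T" for s unfolding d_def using assms(1) that by auto
  ultimately show ?thesis using D mono by blast
qed

lemma EL_cont:
  assumes X: "EL T X" and T: "T \<subseteq> {0..}" and w: "w \<in> Omega" and e: "e > 0"
  shows "\<exists>d>0. \<forall>w'\<in>Omega. path_dist w w' < d \<longrightarrow> \<bar>X w' - X w\<bar> < e"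
proof -
  obtain L where L: "L \<ge> 0" "\<forall>w w'. \<bar>X w - X w'\<bar> \<le> L * (\<Sum>s\<in>T. norm (w s - w' s))"
    using X unfolding EL_def by blast
  have fin: "finite T" using X by (rule EL_finite)
  define e' where "e' = e / (L * real (card T) + 1)"
  have e'0: "e' > 0" unfolding e'_def using e L by (simp add: add_nonneg_pos)
  have "\<forall>s\<in>T. \<exists>d>0. \<forall>w'. (w' \<in> Omega \<and> path_dist w w' < d) \<longrightarrow> norm (w' s - w s) < e'"
    using eval_cont[OF w _ e'0] T by blast
  from finite_delta[OF fin this] obtain d where d: "d > 0"
    "\<forall>w'. (w' \<in> Omega \<and> path_dist w w' < d) \<longrightarrow> (\<forall>s\<in>T. norm (w' s - w s) < e')" by force
  have "\<bar>X w' - X w\<bar> < e" if "w' \<in> Omega" "path_dist w w' < d" for w'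
  proof -
    have "(\<Sum>s\<in>T. norm (w' s - w s)) \<le> real (card T) * e'"
      using d that by (intro sum_bounded_above) (auto intro: less_imp_le)
    then have "\<bar>X w' - X w\<bar> \<le> L * (real (card T) * e')"
      using L by (meson mult_left_mono order_trans)
    also have "\<dots> < e"
    proof -
      have "L * (real (card T) * e') = e * (L * real (card T)) / (L * real (card T) + 1)"
        unfolding e'_def by (simp add: field_simps)
      also have "\<dots> < e" using e L by (simp add: pos_divide_less_eq add_nonneg_pos)
      finally show ?thesis .
    qed
    finally show ?thesis .
  qed
  then show ?thesis using d by blast
qed

lemma ELp_cont:
  assumes "ELp X" "w \<in> Omega" "e > 0"
  shows "\<exists>d>0. \<forall>w'\<in>Omega. path_dist w w' < d \<longrightarrow> \<bar>X w' - X w\<bar> < e"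
  using assms EL_cont unfolding ELp_def by blast

lemma ELp_bcont:
  assumes "ELp X" shows "bcont X"
proof -
  obtain M where "\<forall>w. \<bar>X w\<bar> \<le> M" using assms unfolding ELp_def EL_def by blast
  then show ?thesis unfolding bcont_def using ELp_cont[OF assms] by blast
qed

lemma space_Omega_borel: "space Omega_borel = Omega"
  unfolding Omega_borel_def by (rule space_measure_of) (auto simp: Omega_open_def)

lemma sets_Omega_borel: "sets Omega_borel = sigma_sets Omega (Collect Omega_open)"
  unfolding Omega_borel_def by (rule sets_measure_of) (auto simp: Omega_open_def)

lemma Omega_open_sets: "Omega_open U \<Longrightarrow> U \<in> sets Omega_borel"
  unfolding sets_Omega_borel by auto

lemma bcont_measurable:
  assumes "bcont f"
  shows "f \<in> borel_measurable Omega_borel"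
proof (rule borel_measurableI)
  fix S :: "real set" assume S: "open S"
  have "Omega_open (f -` S \<inter> Omega)" unfolding Omega_open_def
  proof (intro conjI ballI)
    fix w assume w: "w \<in> f -` S \<inter> Omega"
    then obtain e where e: "e > 0" "ball (f w) e \<subseteq> S" using S open_contains_ball by blast
    obtain d where d: "d > 0" "\<forall>w'\<in>Omega. path_dist w w' < d \<longrightarrow> \<bar>f w' - f w\<bar> < e"
      using assms w e unfolding bcont_def by blast
    have "w' \<in> f -` S \<inter> Omega" if "w' \<in> Omega" "path_dist w w' < d" for w'
    proof -
      have "f w' \<in> ball (f w) e" using d that by (simp add: dist_real_def abs_minus_commute)
      then show ?thesis using e that by auto
    qed
    then show "\<exists>e>0. \<forall>w'\<in>Omega. path_dist w w' < e \<longrightarrow> w' \<in> f -` S \<inter> Omega" using d by blast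
  qed auto
  then show "f -` S \<inter> space Omega_borel \<in> sets Omega_borel"
    unfolding space_Omega_borel by (rule Omega_open_sets)
qed

lemma ELp_measurable: "ELp X \<Longrightarrow> X \<in> borel_measurable Omega_borel"
  by (intro bcont_measurable ELp_bcont)

lemma GSet:
  assumes "G_setting G E PP"
  shows "sublinear_exp E" "G_BM G E" "prob_family PP" "weakly_compact PP"
    "\<And>X. X \<in> bLip_cyl {0..} \<Longrightarrow> E X = (SUP P\<in>PP. \<integral>w. X w \<partial>P)"
  using assms unfolding G_setting_def by auto

lemma PPf:
  assumes "prob_family PP" "P \<in> PP"
  shows "prob_space P" "sets P = sets Omega_borel" "space P = Omega"
  using assms unfolding prob_family_def by auto

lemma meas_P:
  fixes f :: "('d::finite) path \<Rightarrow> real"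
  assumes "prob_family PP" "P \<in> PP" "f \<in> borel_measurable Omega_borel"
  shows "f \<in> borel_measurable P"
proof -
  have "f \<in> borel_measurable P \<longleftrightarrow> f \<in> borel_measurable Omega_borel"
    by (rule arg_cong[where f="\<lambda>S. f \<in> S"], rule measurable_cong_sets) (auto simp: PPf(2)[OF assms(1,2)])
  then show ?thesis using assms(3) by simp
qed

lemma ELp_integrable:
  assumes "prob_family PP" "P \<in> PP" "ELp f"
  shows "integrable P f"
proof -
  obtain M where M: "\<forall>w. \<bar>f w\<bar> \<le> M" using assms(3) unfolding ELp_def EL_def by blast
  interpret prob_space P using PPf[OF assms(1,2)] by simp
  show ?thesis
    by (rule integrable_const_bound[where B=M]) (use M meas_P[OF assms(1,2) ELp_measurable[OF assms(3)]] in auto)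
qed

lemma ELp_int_bound:
  assumes "prob_family PP" "P \<in> PP" "ELp f" "\<forall>w. \<bar>f w\<bar> \<le> M"
  shows "\<bar>\<integral>w. f w \<partial>P\<bar> \<le> M"
proof -
  interpret prob_space P using PPf[OF assms(1,2)] by simp
  have i: "integrable P f" by (rule ELp_integrable[OF assms(1-3)])
  have "\<bar>\<integral>w. f w \<partial>P\<bar> \<le> \<integral>w. \<bar>f w\<bar> \<partial>P" by (rule integral_abs_bound)
  also have "\<dots> \<le> \<integral>w. M \<partial>P" using assms(4) i by (intro integral_mono) auto
  also have "\<dots> = M" by (simp add: prob_space)
  finally show ?thesis .
qed

lemma PP_ne:
  assumes "G_setting G E PP" shows "PP \<noteq> {}"
proof
  assume e: "PP = {}"
  have b: "(\<lambda>_. c) \<in> bLip_cyl {0..}" for c :: real by (rule ELp_bLip[OF ELp_const])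
  have "E (\<lambda>_. 0) = E (\<lambda>_. 1)" using GSet(5)[OF assms b[of 0]] GSet(5)[OF assms b[of 1]] e by simp
  then show False using E_const[OF GSet(1)[OF assms]] by (metis zero_neq_one)
qed

lemma int_le_E:
  assumes GS: "G_setting G E PP" and P: "P \<in> PP" and f: "ELp f"
  shows "(\<integral>w. f w \<partial>P) \<le> E f"
proof -
  obtain M where M: "\<forall>w. \<bar>f w\<bar> \<le> M" using f unfolding ELp_def EL_def by blast
  have "bdd_above ((\<lambda>Q. \<integral>w. f w \<partial>Q) ` PP)"
    using ELp_int_bound[OF GSet(3)[OF GS] _ f M] by (intro bdd_aboveI[of _ M]) (auto simp: abs_le_iff)
  then have "(\<integral>w. f w \<partial>P) \<le> (SUP Q\<in>PP. \<integral>w. f w \<partial>Q)" by (rule cSUP_upper[OF P])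
  then show ?thesis using GSet(5)[OF GS ELp_bLip[OF f]] by simp
qed

lemma E_le_upE:
  assumes GS: "G_setting G E PP" and f: "ELp f" and f0: "\<forall>w. f w \<ge> 0"
  shows "ennreal (E f) \<le> upE PP (\<lambda>w. ennreal (f w))"
proof -
  obtain M where M: "\<forall>w. \<bar>f w\<bar> \<le> M" using f unfolding ELp_def EL_def by blast
  have pf: "prob_family PP" by (rule GSet(3)[OF GS])
  have nn: "(\<integral>\<^sup>+w. ennreal (f w) \<partial>Q) = ennreal (\<integral>w. f w \<partial>Q)" if "Q \<in> PP" for Q
    by (rule nn_integral_eq_integral[OF ELp_integrable[OF pf that f]]) (use f0 in auto)
  have "(SUP Q\<in>PP. ennreal (\<integral>w. f w \<partial>Q)) \<le> ennreal M"
    using ELp_int_bound[OF pf _ f M] by (intro SUP_least ennreal_leI) (auto simp: abs_le_iff)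
  then have ntop: "(SUP Q\<in>PP. ennreal (\<integral>w. f w \<partial>Q)) \<noteq> \<top>" by (metis ennreal_neq_top top.extremum_uniqueI)
  have "ennreal (E f) = ennreal (SUP Q\<in>PP. \<integral>w. f w \<partial>Q)" using GSet(5)[OF GS ELp_bLip[OF f]] by simp
  also have "\<dots> = (SUP Q\<in>PP. ennreal (\<integral>w. f w \<partial>Q))" by (rule ennreal_SUP[OF ntop PP_ne[OF GS]])
  also have "\<dots> = upE PP (\<lambda>w. ennreal (f w))" unfolding upE_def using nn by (intro SUP_cong) auto
  finally show ?thesis by simp
qed

lemma ELp_cat_right':
  assumes "ELp X" "t \<ge> 0" shows "ELp (\<lambda>v. X (cat t w v))"
  using assms ELp_cat_right unfolding ELp_def by blast

lemma cyl_main: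
  assumes GS: "G_setting G E PP" and t: "t \<ge> 0" and U: "ELp U" and V: "ELp V" and P: "P \<in> PP"
  shows "(\<integral>\<^sup>+w. ennreal (Et E t U w - Et E t V w) \<partial>P) \<le> upE PP (\<lambda>w. ennreal (U w - V w))"
proof -
  have E: "sublinear_exp E" and G: "G_BM G E" and pf: "prob_family PP" using GSet[OF GS] by auto
  define D where "D = (\<lambda>w. max (U w - V w) 0)"
  have D: "ELp D" unfolding D_def by (intro ELp_max0 ELp_diff U V)
  have ED: "ELp (Et E t D)" by (rule ELp_Et[OF E D t])
  have le: "Et E t U w \<le> Et E t V w + Et E t D w" for w
  proof -
    have "Et E t U w \<le> E (\<lambda>v. V (cat t w v) + D (cat t w v))" unfolding Et_def
      by (intro E_mono[OF E] ELp_add ELp_cat_right' U V D t) (auto simp: D_def)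
    also have "\<dots> \<le> Et E t V w + Et E t D w" unfolding Et_def
      by (intro E_add[OF E] ELp_cat_right' V D t)
    finally show ?thesis .
  qed
  have D0: "Et E t D w \<ge> 0" for w
  proof -
    have "E (\<lambda>_. 0) \<le> Et E t D w" unfolding Et_def
      by (intro E_mono[OF E] ELp_const ELp_cat_right' D t) (auto simp: D_def)
    then show ?thesis using E_const[OF E] by simp
  qed
  have "(\<integral>\<^sup>+w. ennreal (Et E t U w - Et E t V w) \<partial>P) \<le> (\<integral>\<^sup>+w. ennreal (Et E t D w) \<partial>P)"
    using le by (intro nn_integral_mono ennreal_leI) (smt (verit))
  also have "\<dots> = ennreal (\<integral>w. Et E t D w \<partial>P)"
    by (rule nn_integral_eq_integral[OF ELp_integrable[OF pf P ED]]) (use D0 in auto)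
  also have "\<dots> \<le> ennreal (E (Et E t D))" by (intro ennreal_leI int_le_E[OF GS P ED])
  also have "E (Et E t D) = E D" by (rule tower[OF E G t D, symmetric])
  also have "ennreal (E D) \<le> upE PP (\<lambda>w. ennreal (D w))"
    by (rule E_le_upE[OF GS D]) (auto simp: D_def)
  also have "(\<lambda>w. ennreal (D w)) = (\<lambda>w. ennreal (U w - V w))" unfolding D_def by (simp add: ennreal_max_0')
  finally show ?thesis .
qed

lemma cond_cyl_Et:
  fixes X Y :: "('d::finite) path \<Rightarrow> real"
  assumes E: "sublinear_exp E" and t: "t \<ge> 0" and X: "ELp X" and cc: "cond_cyl E t X Y"
  shows "\<forall>w\<in>Omega. Y w = Et E t X w"
proof
  fix w :: "'d path" assume w: "w \<in> Omega"
  obtain m k s r phi where c: "\<forall>i<m. s i \<in> {0..t}" "\<forall>j<k. t \<le> r j" "blip_fun (m + k) phi"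
     "\<forall>w\<in>Omega. X w = phi (\<lambda>i. if i < m then w (s i) else if i < m + k then w (r (i - m)) - w t else 0)"
     "\<forall>w\<in>Omega. Y w = E (\<lambda>w'. phi (\<lambda>i. if i < m then w (s i)
                                       else if i < m + k then w' (r (i - m)) - w' t else 0))"
    using cc unfolding cond_cyl_def by blast
  obtain M L where HM: "\<forall>x. \<bar>phi x\<bar> \<le> M" "\<forall>x y. \<bar>phi x - phi y\<bar> \<le> L * (\<Sum>i<m + k. norm (x i - y i))"
    using c(3) unfolding blip_fun_def by blast
  define g where "g = (\<lambda>w'::'d path. phi (\<lambda>i. if i < m then w (s i) else if i < m + k then w' (r (i - m)) - w' t else 0))"
  define S where "S = r ` {..<k} \<union> {t}"
  have finS: "finite S" unfolding S_def by auto
  have "EL S g"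
  proof (rule ELI[OF finS, where M=M and L="max L 0 * (real (m + k) * 2)"])
    show "\<bar>g v\<bar> \<le> M" for v unfolding g_def using HM by blast
    show "0 \<le> max L 0 * (real (m + k) * 2)" by simp
    fix a b :: "'d path"
    define za where "za = (\<lambda>i. if i < m then w (s i) else if i < m + k then a (r (i - m)) - a t else 0)"
    define zb where "zb = (\<lambda>i. if i < m then w (s i) else if i < m + k then b (r (i - m)) - b t else 0)"
    define Sab where "Sab = (\<Sum>u\<in>S. norm (a u - b u))"
    have hterm: "norm (za i - zb i) \<le> 2 * Sab" if "i \<in> {..<m+k}" for i
    proof (cases "i < m")
      case True then show ?thesis unfolding za_def zb_def Sab_def by (auto intro: sum_nonneg)
    next
      case False
      then have j: "i - m < k" using that by auto
      have 1: "norm (a (r (i - m)) - b (r (i - m))) \<le> Sab" unfolding Sab_def using j finS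
        by (intro member_le_sum) (auto simp: S_def)
      have 2: "norm (a t - b t) \<le> Sab" unfolding Sab_def using finS
        by (intro member_le_sum) (auto simp: S_def)
      have "za i - zb i = (a (r (i - m)) - b (r (i - m))) - (a t - b t)"
        unfolding za_def zb_def using False that by auto
      then have "norm (za i - zb i) \<le> norm (a (r (i - m)) - b (r (i - m))) + norm (a t - b t)"
        by (metis norm_triangle_ineq4)
      then show ?thesis using 1 2 by linarith
    qed
    have "\<bar>g a - g b\<bar> \<le> L * (\<Sum>i<m + k. norm (za i - zb i))" unfolding g_def za_def zb_def using HM by blast
    also have "\<dots> \<le> max L 0 * (\<Sum>i<m + k. norm (za i - zb i))"
      by (rule mult_right_mono) (auto intro: sum_nonneg)
    also have "(\<Sum>i<m + k. norm (za i - zb i)) \<le> real (card {..<m+k}) * (2 * Sab)"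
      using hterm by (intro sum_bounded_above) auto
    then have "max L 0 * (\<Sum>i<m + k. norm (za i - zb i)) \<le> max L 0 * (real (m + k) * (2 * Sab))"
      by (intro mult_left_mono) auto
    finally show "\<bar>g a - g b\<bar> \<le> max L 0 * (real (m + k) * 2) * (\<Sum>u\<in>S. norm (a u - b u))"
      unfolding Sab_def by (simp add: algebra_simps)
  qed
  moreover have "S \<subseteq> {0..}" unfolding S_def using c(2) t by force
  ultimately have gE: "ELp g" by (rule ELpI)
  have fE: "ELp (\<lambda>v. X (cat t w v))" by (rule ELp_cat_right'[OF X t])
  have "\<forall>v::'d path\<in>Omega. X (cat t w v) = g v"
  proof
    fix v :: "'d path" assume v: "v \<in> Omega"
    have cw: "cat t w v \<in> Omega" by (rule cat_Omega[OF t w v])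
    have "(\<lambda>i. if i < m then cat t w v (s i) else if i < m + k then cat t w v (r (i - m)) - cat t w v t else 0)
       = (\<lambda>i. if i < m then w (s i) else if i < m + k then v (r (i - m)) - v t else 0)"
    proof
      fix i
      show "(if i < m then cat t w v (s i) else if i < m + k then cat t w v (r (i - m)) - cat t w v t else 0)
          = (if i < m then w (s i) else if i < m + k then v (r (i - m)) - v t else 0)"
      proof (cases "i < m")
        case True then have "s i \<le> t" using c(1) by auto
        then show ?thesis using True unfolding cat_def by (simp add: min_def max_def)
      next
        case False
        show ?thesis
        proof (cases "i < m + k")
          case True then have "t \<le> r (i - m)" using c(2) False by auto
          then show ?thesis using True False unfolding cat_def by (simp add: min_def max_def)
        qed (use False in simp)
      qed
    qed
    then show "X (cat t w v) = g v" using c(4) cw unfolding g_def by simp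
  qed
  then have "E (\<lambda>v. X (cat t w v)) = E g" by (rule E_ext[OF E fE gE])
  then show "Y w = Et E t X w" using c(5) w unfolding Et_def g_def by simp
qed

lemma enn_tri:
  "ennreal (x - y) \<le> ennreal \<bar>x' - x\<bar> + ennreal (x' - y') + ennreal \<bar>y' - y\<bar>"
proof -
  have "ennreal (x - y) \<le> ennreal (\<bar>x' - x\<bar> + max (x' - y') 0 + \<bar>y' - y\<bar>)"
    by (rule ennreal_leI) linarith
  also have "\<dots> = ennreal \<bar>x' - x\<bar> + ennreal (max (x' - y') 0) + ennreal \<bar>y' - y\<bar>"
    by (simp add: ennreal_plus)
  finally show ?thesis by (simp add: ennreal_max_0')
qed

lemma enn_tri2:
  "ennreal (x - y) \<le> ennreal \<bar>x - x'\<bar> + ennreal (x' - y') + ennreal \<bar>y - y'\<bar>"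
  using enn_tri[of x y x' y'] by (simp add: abs_minus_commute)

lemma upE_ge: "Q \<in> PP \<Longrightarrow> (\<integral>\<^sup>+w. f w \<partial>Q) \<le> upE PP f"
  unfolding upE_def by (rule SUP_upper)

lemma nn3:
  assumes "f \<in> borel_measurable Q" "g \<in> borel_measurable Q" "h \<in> borel_measurable Q"
  shows "(\<integral>\<^sup>+w. f w + g w + h w \<partial>Q) = (\<integral>\<^sup>+w. f w \<partial>Q) + (\<integral>\<^sup>+w. g w \<partial>Q) + (\<integral>\<^sup>+w. h w \<partial>Q)"
  using assms by (simp add: nn_integral_add)

lemma lim_le:
  fixes A B :: ennreal
  assumes "\<forall>k. A \<le> B + e k" "e \<longlonglongrightarrow> 0"
  shows "A \<le> B"
proof -
  have "(\<lambda>k. B + e k) \<longlonglongrightarrow> B + 0" by (intro tendsto_add tendsto_const assms(2))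
  then show ?thesis using assms(1) by (intro LIMSEQ_le_const[of "\<lambda>k. B + e k"]) auto
qed

lemma L1_main:
  assumes GS: "G_setting G E PP" and t: "t \<ge> 0" and cU: "cond_exp E PP t U YU" and cV: "cond_exp E PP t V YV"
    and P: "P \<in> PP"
  shows "(\<integral>\<^sup>+w. ennreal (YU w - YV w) \<partial>P) \<le> upE PP (\<lambda>w. ennreal (U w - V w))"
proof -
  have E: "sublinear_exp E" and pf: "prob_family PP" using GSet[OF GS] by auto
  obtain Uk YUk where hU: "\<forall>k. Uk k \<in> bLip_cyl {0..} \<and> cond_cyl E t (Uk k) (YUk k)"
    "(\<lambda>k. upE PP (\<lambda>w. ennreal \<bar>Uk k w - U w\<bar>)) \<longlonglongrightarrow> 0" "(\<lambda>k. upE PP (\<lambda>w. ennreal \<bar>YUk k w - YU w\<bar>)) \<longlonglongrightarrow> 0"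
    and mU: "U \<in> L1G PP {0..}" "YU \<in> borel_measurable Omega_borel"
    using cU unfolding cond_exp_def by blast
  obtain Vk YVk where hV: "\<forall>k. Vk k \<in> bLip_cyl {0..} \<and> cond_cyl E t (Vk k) (YVk k)"
    "(\<lambda>k. upE PP (\<lambda>w. ennreal \<bar>Vk k w - V w\<bar>)) \<longlonglongrightarrow> 0" "(\<lambda>k. upE PP (\<lambda>w. ennreal \<bar>YVk k w - YV w\<bar>)) \<longlonglongrightarrow> 0"
    and mV: "V \<in> L1G PP {0..}" "YV \<in> borel_measurable Omega_borel"
    using cV unfolding cond_exp_def by blast
  have UkE: "ELp (Uk k)" for k using hU by (intro ELp_bLipI) blast
  have VkE: "ELp (Vk k)" for k using hV by (intro ELp_bLipI) blast
  have eqU: "\<forall>w\<in>Omega. YUk k w = Et E t (Uk k) w" for k using cond_cyl_Et[OF E t UkE] hU by blast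
  have eqV: "\<forall>w\<in>Omega. YVk k w = Et E t (Vk k) w" for k using cond_cyl_Et[OF E t VkE] hV by blast
  have sp: "space Q = Omega" if "Q \<in> PP" for Q using PPf[OF pf that] by simp
  have mUU: "U \<in> borel_measurable Q" "V \<in> borel_measurable Q" "YU \<in> borel_measurable Q" "YV \<in> borel_measurable Q"
    if "Q \<in> PP" for Q
  proof -
    have "U \<in> borel_measurable Omega_borel" "V \<in> borel_measurable Omega_borel"
      using mU(1) mV(1) unfolding L1G_def by auto
    then show "U \<in> borel_measurable Q" "V \<in> borel_measurable Q" "YU \<in> borel_measurable Q" "YV \<in> borel_measurable Q"
      using mU(2) mV(2) by (auto intro: meas_P[OF pf that])
  qed
  have mk: "Uk k \<in> borel_measurable Q" "Vk k \<in> borel_measurable Q"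
     "Et E t (Uk k) \<in> borel_measurable Q" "Et E t (Vk k) \<in> borel_measurable Q"
    if "Q \<in> PP" for Q k
    by (auto intro!: meas_P[OF pf that] ELp_measurable UkE VkE ELp_Et[OF E _ t])
  define e where "e = (\<lambda>k. upE PP (\<lambda>w. ennreal \<bar>YUk k w - YU w\<bar>) + upE PP (\<lambda>w. ennreal \<bar>YVk k w - YV w\<bar>)
      + (upE PP (\<lambda>w. ennreal \<bar>Uk k w - U w\<bar>) + upE PP (\<lambda>w. ennreal \<bar>Vk k w - V w\<bar>)))"
  have "e \<longlonglongrightarrow> 0 + 0 + (0 + 0)" unfolding e_def
    by (intro tendsto_add hU(2) hU(3) hV(2) hV(3))
  then have e0: "e \<longlonglongrightarrow> 0" by simp
  have step2: "upE PP (\<lambda>w. ennreal (Uk k w - Vk k w)) \<le> upE PP (\<lambda>w. ennreal \<bar>Uk k w - U w\<bar>) + upE PP (\<lambda>w. ennreal (U w - V w)) + upE PP (\<lambda>w. ennreal \<bar>Vk k w - V w\<bar>)" for k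
    unfolding upE_def[of PP "\<lambda>w. ennreal (Uk k w - Vk k w)"]
  proof (rule SUP_least)
    fix Q assume Q: "Q \<in> PP"
    note [measurable] = mUU[OF Q] mk[OF Q]
    have "(\<integral>\<^sup>+w. ennreal (Uk k w - Vk k w) \<partial>Q) \<le> (\<integral>\<^sup>+w. ennreal \<bar>Uk k w - U w\<bar> + ennreal (U w - V w) + ennreal \<bar>Vk k w - V w\<bar> \<partial>Q)"
      by (rule nn_integral_mono) (rule enn_tri2)
    also have "\<dots> = (\<integral>\<^sup>+w. ennreal \<bar>Uk k w - U w\<bar> \<partial>Q) + (\<integral>\<^sup>+w. ennreal (U w - V w) \<partial>Q) + (\<integral>\<^sup>+w. ennreal \<bar>Vk k w - V w\<bar> \<partial>Q)"
      by (rule nn3) measurable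
    also have "\<dots> \<le> upE PP (\<lambda>w. ennreal \<bar>Uk k w - U w\<bar>) + upE PP (\<lambda>w. ennreal (U w - V w)) + upE PP (\<lambda>w. ennreal \<bar>Vk k w - V w\<bar>)"
      by (intro add_mono upE_ge Q)
    finally show "(\<integral>\<^sup>+w. ennreal (Uk k w - Vk k w) \<partial>Q) \<le> upE PP (\<lambda>w. ennreal \<bar>Uk k w - U w\<bar>) + upE PP (\<lambda>w. ennreal (U w - V w)) + upE PP (\<lambda>w. ennreal \<bar>Vk k w - V w\<bar>)" .
  qed
  have "(\<integral>\<^sup>+w. ennreal (YU w - YV w) \<partial>P) \<le> upE PP (\<lambda>w. ennreal (U w - V w)) + e k" for k
  proof -
    note [measurable] = mUU[OF P] mk[OF P]
    have "(\<integral>\<^sup>+w. ennreal (YU w - YV w) \<partial>P) \<le> (\<integral>\<^sup>+w. ennreal \<bar>Et E t (Uk k) w - YU w\<bar> + ennreal (Et E t (Uk k) w - Et E t (Vk k) w) + ennreal \<bar>Et E t (Vk k) w - YV w\<bar> \<partial>P)"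
      by (rule nn_integral_mono) (rule enn_tri)
    also have "\<dots> = (\<integral>\<^sup>+w. ennreal \<bar>Et E t (Uk k) w - YU w\<bar> \<partial>P) + (\<integral>\<^sup>+w. ennreal (Et E t (Uk k) w - Et E t (Vk k) w) \<partial>P) + (\<integral>\<^sup>+w. ennreal \<bar>Et E t (Vk k) w - YV w\<bar> \<partial>P)"
      by (rule nn3) measurable
    also have "(\<integral>\<^sup>+w. ennreal \<bar>Et E t (Uk k) w - YU w\<bar> \<partial>P) = (\<integral>\<^sup>+w. ennreal \<bar>YUk k w - YU w\<bar> \<partial>P)"
      using eqU sp[OF P] by (intro nn_integral_cong) auto
    also have "(\<integral>\<^sup>+w. ennreal \<bar>Et E t (Vk k) w - YV w\<bar> \<partial>P) = (\<integral>\<^sup>+w. ennreal \<bar>YVk k w - YV w\<bar> \<partial>P)"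
      using eqV sp[OF P] by (intro nn_integral_cong) auto
    also have "(\<integral>\<^sup>+w. ennreal \<bar>YUk k w - YU w\<bar> \<partial>P) + (\<integral>\<^sup>+w. ennreal (Et E t (Uk k) w - Et E t (Vk k) w) \<partial>P) + (\<integral>\<^sup>+w. ennreal \<bar>YVk k w - YV w\<bar> \<partial>P)
       \<le> upE PP (\<lambda>w. ennreal \<bar>YUk k w - YU w\<bar>) + upE PP (\<lambda>w. ennreal (Uk k w - Vk k w)) + upE PP (\<lambda>w. ennreal \<bar>YVk k w - YV w\<bar>)"
      by (intro add_mono upE_ge P cyl_main[OF GS t UkE VkE P])
    also have "\<dots> \<le> upE PP (\<lambda>w. ennreal \<bar>YUk k w - YU w\<bar>) + (upE PP (\<lambda>w. ennreal \<bar>Uk k w - U w\<bar>) + upE PP (\<lambda>w. ennreal (U w - V w)) + upE PP (\<lambda>w. ennreal \<bar>Vk k w - V w\<bar>)) + upE PP (\<lambda>w. ennreal \<bar>YVk k w - YV w\<bar>)"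
      by (intro add_mono step2 order_refl)
    also have "\<dots> = upE PP (\<lambda>w. ennreal (U w - V w)) + e k" unfolding e_def by (simp add: ac_simps)
    finally show ?thesis .
  qed
  then show ?thesis using lim_le e0 by blast
qed

lemma enn_split: "(0::real) \<le> z \<Longrightarrow> ennreal z \<le> ennreal c + ennreal \<bar>c - z\<bar>"
proof -
  assume z: "0 \<le> z"
  have "ennreal z \<le> ennreal (max c 0 + \<bar>c - z\<bar>)" by (rule ennreal_leI) linarith
  also have "\<dots> = ennreal (max c 0) + ennreal \<bar>c - z\<bar>" by (simp add: ennreal_plus)
  finally show ?thesis by (simp add: ennreal_max_0')
qed

lemma dini:
  fixes Z :: "nat \<Rightarrow> ('d::finite) path \<Rightarrow> real"
  assumes GS: "G_setting G E PP"
    and mZ: "\<And>n. Z n \<in> borel_measurable Omega_borel"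
    and Z0: "\<And>n w. Z n w \<ge> 0"
    and appr: "\<And>n \<delta>. \<delta> > 0 \<Longrightarrow> \<exists>C. ELp C \<and> (\<forall>w. C w \<ge> 0) \<and> upE PP (\<lambda>w. ennreal \<bar>C w - Z n w\<bar>) < ennreal \<delta>"
    and AEd: "\<And>P. P \<in> PP \<Longrightarrow> AE w in P. (\<forall>n. Z (Suc n) w \<le> Z n w) \<and> (\<lambda>n. Z n w) \<longlonglongrightarrow> 0"
  shows "(\<lambda>n. upE PP (\<lambda>w. ennreal (Z n w))) \<longlonglongrightarrow> 0"
proof -
  have pf: "prob_family PP" and wc: "weakly_compact PP" using GSet[OF GS] by auto
  have mZP: "Z n \<in> borel_measurable P" if "P \<in> PP" for n P by (rule meas_P[OF pf that mZ])
  have AEmono: "AE w in P. Z n' w \<le> Z n w" if P: "P \<in> PP" and nn: "n \<le> n'" for P n n'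
    using AEd[OF P]
  proof eventually_elim
    case (elim w) then show ?case using lift_Suc_antimono_le[of "\<lambda>n. Z n w"] nn by blast
  qed
  have int_mono: "(\<integral>\<^sup>+w. ennreal (Z n' w) \<partial>P) \<le> (\<integral>\<^sup>+w. ennreal (Z n w) \<partial>P)" if "P \<in> PP" "n \<le> n'" for P n n'
    using AEmono[OF that] by (intro nn_integral_mono_AE) (auto elim: AE_mp intro: ennreal_leI)
  define u where "u = (\<lambda>n. upE PP (\<lambda>w. ennreal (Z n w)))"
  have udec: "antimono u"
  proof (rule antimonoI)
    fix n n' :: nat assume "n \<le> n'"
    show "u n' \<le> u n" unfolding u_def upE_def[of PP "\<lambda>w. ennreal (Z n' w)"]
    proof (rule SUP_least)
      fix Q assume Q: "Q \<in> PP"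
      have "(\<integral>\<^sup>+w. ennreal (Z n' w) \<partial>Q) \<le> (\<integral>\<^sup>+w. ennreal (Z n w) \<partial>Q)" by (rule int_mono[OF Q \<open>n \<le> n'\<close>])
      also have "\<dots> \<le> upE PP (\<lambda>w. ennreal (Z n w))" by (rule upE_ge[OF Q])
      finally show "(\<integral>\<^sup>+w. ennreal (Z n' w) \<partial>Q) \<le> upE PP (\<lambda>w. ennreal (Z n w))" .
    qed
  qed
  have Zbound: "(\<integral>\<^sup>+w. ennreal (Z m w) \<partial>Q) \<le> ennreal (\<integral>w. C w \<partial>Q) + upE PP (\<lambda>w. ennreal \<bar>C w - Z m w\<bar>)"
    if Q: "Q \<in> PP" and C: "ELp C" "\<forall>w. C w \<ge> 0" for Q m C
  proof -
    note [measurable] = mZP[OF Q] meas_P[OF pf Q ELp_measurable[OF C(1)]]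
    have "(\<integral>\<^sup>+w. ennreal (Z m w) \<partial>Q) \<le> (\<integral>\<^sup>+w. ennreal (C w) + ennreal \<bar>C w - Z m w\<bar> \<partial>Q)"
      by (rule nn_integral_mono) (rule enn_split[OF Z0])
    also have "\<dots> = (\<integral>\<^sup>+w. ennreal (C w) \<partial>Q) + (\<integral>\<^sup>+w. ennreal \<bar>C w - Z m w\<bar> \<partial>Q)"
      by (rule nn_integral_add) measurable
    also have "(\<integral>\<^sup>+w. ennreal (C w) \<partial>Q) = ennreal (\<integral>w. C w \<partial>Q)"
      by (rule nn_integral_eq_integral[OF ELp_integrable[OF pf Q C(1)]]) (use C in auto)
    also have "(\<integral>\<^sup>+w. ennreal \<bar>C w - Z m w\<bar> \<partial>Q) \<le> upE PP (\<lambda>w. ennreal \<bar>C w - Z m w\<bar>)" by (rule upE_ge[OF Q])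
    finally show ?thesis by (simp add: add_mono)
  qed
  have key: "(INF n. u n) \<le> ennreal \<epsilon>" if eps: "\<epsilon> > 0" for \<epsilon>
  proof (rule ccontr)
    assume "\<not> (INF n. u n) \<le> ennreal \<epsilon>"
    then have lt: "ennreal \<epsilon> < u n" for n by (meson INF_lower UNIV_I not_le order_less_le_trans)
    have "\<forall>n. \<exists>P. P \<in> PP \<and> ennreal \<epsilon> < (\<integral>\<^sup>+w. ennreal (Z n w) \<partial>P)"
      using lt unfolding u_def upE_def by (auto simp: less_SUP_iff)
    then obtain Pn where Pn: "\<And>n. Pn n \<in> PP" "\<And>n. ennreal \<epsilon> < (\<integral>\<^sup>+w. ennreal (Z n w) \<partial>Pn n)" by metis
    obtain r Pl where r: "strict_mono r" "Pl \<in> PP" "weak_conv (Pn \<circ> r) Pl"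
      using wc Pn(1) unfolding weakly_compact_def by blast
    have claim: "ennreal \<epsilon> \<le> (\<integral>\<^sup>+w. ennreal (Z m w) \<partial>Pl)" for m
    proof (rule ennreal_le_epsilon)
      fix e :: real assume e: "0 < e"
      define \<delta> where "\<delta> = e / 2"
      have d0: "\<delta> > 0" unfolding \<delta>_def using e by simp
      obtain C where C: "ELp C" "\<forall>w. C w \<ge> 0" "upE PP (\<lambda>w. ennreal \<bar>C w - Z m w\<bar>) < ennreal \<delta>"
        using appr[OF d0] by blast
      have "\<epsilon> - \<delta> \<le> (\<integral>w. C w \<partial>((Pn \<circ> r) n))" if "n \<ge> m" for n
      proof -
        have "m \<le> r n" using seq_suble[OF r(1), of n] that by simp
        have "ennreal \<epsilon> < (\<integral>\<^sup>+w. ennreal (Z (r n) w) \<partial>Pn (r n))" by (rule Pn(2))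
        also have "\<dots> \<le> (\<integral>\<^sup>+w. ennreal (Z m w) \<partial>Pn (r n))" by (rule int_mono[OF Pn(1) \<open>m \<le> r n\<close>])
        also have "\<dots> \<le> ennreal (\<integral>w. C w \<partial>Pn (r n)) + upE PP (\<lambda>w. ennreal \<bar>C w - Z m w\<bar>)"
          by (rule Zbound[OF Pn(1) C(1,2)])
        also have "\<dots> \<le> ennreal (\<integral>w. C w \<partial>Pn (r n)) + ennreal \<delta>" using C(3) by (intro add_mono) auto
        also have "\<dots> = ennreal ((\<integral>w. C w \<partial>Pn (r n)) + \<delta>)"
          using C(2) d0 by (subst ennreal_plus) (auto intro: integral_nonneg_AE)
        finally have "\<epsilon> < (\<integral>w. C w \<partial>Pn (r n)) + \<delta>" using eps by (simp add: ennreal_less_iff)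
        then show ?thesis by (simp add: o_def)
      qed
      moreover have "(\<lambda>n. \<integral>w. C w \<partial>((Pn \<circ> r) n)) \<longlonglongrightarrow> (\<integral>w. C w \<partial>Pl)"
        using r(3) ELp_bcont[OF C(1)] unfolding weak_conv_def by blast
      ultimately have le1: "\<epsilon> - \<delta> \<le> (\<integral>w. C w \<partial>Pl)"
        by (intro LIMSEQ_le_const[where X="\<lambda>n. \<integral>w. C w \<partial>((Pn \<circ> r) n)"]) auto
      have "ennreal \<epsilon> \<le> ennreal (\<epsilon> - \<delta>) + ennreal \<delta>"
      proof -
        have "ennreal \<epsilon> \<le> ennreal (max (\<epsilon> - \<delta>) 0 + \<delta>)" by (rule ennreal_leI) linarith
        also have "\<dots> = ennreal (max (\<epsilon> - \<delta>) 0) + ennreal \<delta>" using d0 by (simp add: ennreal_plus)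
        finally show ?thesis by (simp add: ennreal_max_0')
      qed
      also have "\<dots> \<le> ennreal (\<integral>w. C w \<partial>Pl) + ennreal \<delta>" using le1 by (intro add_mono ennreal_leI) auto
      also have "ennreal (\<integral>w. C w \<partial>Pl) \<le> (\<integral>\<^sup>+w. ennreal (Z m w) \<partial>Pl) + ennreal \<delta>"
      proof -
        note [measurable] = mZP[OF r(2)] meas_P[OF pf r(2) ELp_measurable[OF C(1)]]
        have "ennreal (\<integral>w. C w \<partial>Pl) = (\<integral>\<^sup>+w. ennreal (C w) \<partial>Pl)"
          by (rule nn_integral_eq_integral[OF ELp_integrable[OF pf r(2) C(1)], symmetric]) (use C in auto)
        also have "\<dots> \<le> (\<integral>\<^sup>+w. ennreal (Z m w) + ennreal \<bar>C w - Z m w\<bar> \<partial>Pl)"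
        proof (rule nn_integral_mono)
          fix w
          have "ennreal (C w) \<le> ennreal (Z m w + \<bar>C w - Z m w\<bar>)" by (rule ennreal_leI) linarith
          also have "\<dots> = ennreal (Z m w) + ennreal \<bar>C w - Z m w\<bar>" using Z0 by (simp add: ennreal_plus)
          finally show "ennreal (C w) \<le> ennreal (Z m w) + ennreal \<bar>C w - Z m w\<bar>" .
        qed
        also have "\<dots> = (\<integral>\<^sup>+w. ennreal (Z m w) \<partial>Pl) + (\<integral>\<^sup>+w. ennreal \<bar>C w - Z m w\<bar> \<partial>Pl)"
          by (rule nn_integral_add) measurable
        also have "(\<integral>\<^sup>+w. ennreal \<bar>C w - Z m w\<bar> \<partial>Pl) \<le> ennreal \<delta>"
          using upE_ge[OF r(2), of "\<lambda>w. ennreal \<bar>C w - Z m w\<bar>"] C(3) by simp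
        finally show ?thesis by (simp add: add_mono)
      qed
      finally have "ennreal \<epsilon> \<le> (\<integral>\<^sup>+w. ennreal (Z m w) \<partial>Pl) + ennreal \<delta> + ennreal \<delta>"
        by (simp add: add_mono)
      also have "\<dots> = (\<integral>\<^sup>+w. ennreal (Z m w) \<partial>Pl) + (ennreal \<delta> + ennreal \<delta>)"
        by (simp only: add.assoc)
      also have "ennreal \<delta> + ennreal \<delta> = ennreal e"
        using d0 ennreal_plus[of \<delta> \<delta>] unfolding \<delta>_def by simp
      finally show "ennreal \<epsilon> \<le> (\<integral>\<^sup>+w. ennreal (Z m w) \<partial>Pl) + ennreal e" .
    qed
    have fin0: "(\<integral>\<^sup>+w. ennreal (Z 0 w) \<partial>Pl) < \<infinity>"
    proof -
      obtain C where C: "ELp C" "\<forall>w. C w \<ge> 0" "upE PP (\<lambda>w. ennreal \<bar>C w - Z 0 w\<bar>) < ennreal 1"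
        using appr[of 1] by auto
      have "(\<integral>\<^sup>+w. ennreal (Z 0 w) \<partial>Pl) \<le> ennreal (\<integral>w. C w \<partial>Pl) + upE PP (\<lambda>w. ennreal \<bar>C w - Z 0 w\<bar>)"
        by (rule Zbound[OF r(2) C(1,2)])
      also have "\<dots> < \<infinity>"
      proof -
        have u1: "upE PP (\<lambda>w. ennreal \<bar>C w - Z 0 w\<bar>) < \<top>" by (rule order.strict_trans[OF C(3) ennreal_less_top])
        then show ?thesis by (simp only: infinity_ennreal_def ennreal_add_less_top ennreal_less_top simp_thms)
      qed
      finally show ?thesis .
    qed
    have eq1: "(\<integral>\<^sup>+w. (INF m. ennreal (Z m w)) \<partial>Pl) = (INF m. (\<integral>\<^sup>+w. ennreal (Z m w) \<partial>Pl))"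
    proof (rule nn_integral_monotone_convergence_INF_AE')
      show "AE w in Pl. ennreal (Z (Suc i) w) \<le> ennreal (Z i w)" for i
        using AEmono[OF r(2), of i "Suc i"] by (auto elim: AE_mp intro: ennreal_leI)
      show "(\<lambda>w. ennreal (Z i w)) \<in> borel_measurable Pl" for i using mZP[OF r(2)] by measurable
      show "(\<integral>\<^sup>+w. ennreal (Z 0 w) \<partial>Pl) < \<infinity>" by (rule fin0)
    qed
    have eq2: "(\<integral>\<^sup>+w. (INF m. ennreal (Z m w)) \<partial>Pl) = (\<integral>\<^sup>+w. 0 \<partial>Pl)"
    proof (rule nn_integral_cong_AE)
      show "AE w in Pl. (INF m. ennreal (Z m w)) = 0"
        using AEd[OF r(2)]
      proof eventually_elim
        case (elim w)
        have dec: "\<And>n. Z (Suc n) w \<le> Z n w" using elim by blast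
        have am: "antimono (\<lambda>m. ennreal (Z m w))"
        proof (rule antimonoI)
          fix a b :: nat assume ab: "a \<le> b"
          show "ennreal (Z b w) \<le> ennreal (Z a w)"
            by (rule ennreal_leI, rule lift_Suc_antimono_le[of "\<lambda>m. Z m w", OF dec ab])
        qed
        have l1: "(\<lambda>m. ennreal (Z m w)) \<longlonglongrightarrow> ennreal 0" using elim by (intro tendsto_ennrealI) blast
        have l2: "(\<lambda>m. ennreal (Z m w)) \<longlonglongrightarrow> (INF m. ennreal (Z m w))" by (rule LIMSEQ_INF[OF am])
        have "(INF m. ennreal (Z m w)) = ennreal 0" by (rule LIMSEQ_unique[OF l2 l1])
        then show ?case by simp
      qed
    qed
    have "(INF m. (\<integral>\<^sup>+w. ennreal (Z m w) \<partial>Pl)) = 0" using eq1 eq2 by simp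
    moreover have "ennreal \<epsilon> \<le> (INF m. (\<integral>\<^sup>+w. ennreal (Z m w) \<partial>Pl))" by (rule INF_greatest) (rule claim)
    ultimately show False using eps by simp
  qed
  have INF0: "(INF n. u n) = 0"
  proof -
    have "(INF n. u n) \<le> 0"
    proof (rule ennreal_le_epsilon)
      fix e :: real assume "0 < e"
      then show "(INF n. u n) \<le> 0 + ennreal e" unfolding add_0_left by (rule key)
    qed
    then show ?thesis by (simp only: le_zero_eq)
  qed
  have "u \<longlonglongrightarrow> (INF n. u n)" by (rule LIMSEQ_INF[OF udec])
  then have "u \<longlonglongrightarrow> 0" unfolding INF0 .
  then show ?thesis unfolding u_def .
qed

lemma cap0_null:
  assumes pf: "prob_family PP" and P: "P \<in> PP" and A: "A \<in> sets Omega_borel" and c: "cap PP A = 0"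
  shows "emeasure P A = 0"
proof -
  have ps: "prob_space P" and sP: "sets P = sets Omega_borel" using PPf[OF pf P] by auto
  have "bdd_above ((\<lambda>Q. measure Q A) ` PP)"
    using PPf(1)[OF pf] by (intro bdd_aboveI[of _ 1]) (auto intro: prob_space.prob_le_1)
  then have "measure P A \<le> cap PP A" unfolding cap_def by (rule cSUP_upper[OF P])
  then have "measure P A = 0" using c by (simp add: measure_nonneg order.antisym)
  moreover have "emeasure P A = ennreal (measure P A)"
  proof -
    interpret prob_space P by (rule ps)
    show ?thesis by (rule emeasure_eq_measure)
  qed
  ultimately show ?thesis by simp
qed

lemma qs_AE:
  assumes pf: "prob_family PP" and q: "qs PP Q" and P: "P \<in> PP"
  shows "AE w in P. Q w"
proof -
  obtain A where A: "A \<in> sets Omega_borel" "cap PP A = 0" "\<forall>w\<in>Omega - A. Q w" using q unfolding qs_def by blast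
  have "A \<in> null_sets P" using cap0_null[OF pf P A(1,2)] A(1) PPf(2)[OF pf P] by (simp add: null_sets_def)
  moreover have "{w \<in> space P. \<not> Q w} \<subseteq> A" using A(3) PPf(3)[OF pf P] by auto
  ultimately show ?thesis by (rule AE_I')
qed

lemma qsI0:
  assumes pf: "prob_family PP" and ne: "PP \<noteq> {}" and A: "A \<in> sets Omega_borel"
    and z: "\<And>P. P \<in> PP \<Longrightarrow> emeasure P A = 0" and Q: "\<forall>w\<in>Omega - A. Q w"
  shows "qs PP Q"
proof -
  have "cap PP A = (SUP P\<in>PP. (0::real))" unfolding cap_def
    by (rule SUP_cong[OF refl]) (simp add: measure_def z)
  also have "\<dots> = 0" by (rule cSUP_const[OF ne])
  finally show ?thesis unfolding qs_def using A Q by blast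
qed

lemma qs_of_AE:
  assumes pf: "prob_family PP" and ne: "PP \<noteq> {}" and A: "{w\<in>Omega. \<not> Q w} \<in> sets Omega_borel"
    and ae: "\<And>P. P \<in> PP \<Longrightarrow> AE w in P. Q w"
  shows "qs PP Q"
proof (rule qsI0[OF pf ne A])
  fix P assume P: "P \<in> PP"
  have "(AE w in P. Q w) \<longleftrightarrow> emeasure P {w\<in>Omega. \<not> Q w} = 0"
    by (rule AE_iff_measurable) (use A PPf[OF pf P] in auto)
  then show "emeasure P {w\<in>Omega. \<not> Q w} = 0" using ae[OF P] by simp
qed auto

lemma qs_mono:
  assumes "qs PP Q" "\<forall>w\<in>Omega. Q w \<longrightarrow> R w" shows "qs PP R"
  using assms unfolding qs_def by blast

lemma qs_conj:
  assumes pf: "prob_family PP" and ne: "PP \<noteq> {}" and "qs PP Q1" "qs PP Q2"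
  shows "qs PP (\<lambda>w. Q1 w \<and> Q2 w)"
proof -
  obtain A1 where A1: "A1 \<in> sets Omega_borel" "cap PP A1 = 0" "\<forall>w\<in>Omega - A1. Q1 w" using assms(3) unfolding qs_def by blast
  obtain A2 where A2: "A2 \<in> sets Omega_borel" "cap PP A2 = 0" "\<forall>w\<in>Omega - A2. Q2 w" using assms(4) unfolding qs_def by blast
  show ?thesis
  proof (rule qsI0[OF pf ne, of "A1 \<union> A2"])
    show "A1 \<union> A2 \<in> sets Omega_borel" using A1 A2 by auto
    fix P assume P: "P \<in> PP"
    have "A1 \<in> null_sets P" "A2 \<in> null_sets P"
      using cap0_null[OF pf P A1(1,2)] cap0_null[OF pf P A2(1,2)] A1(1) A2(1) PPf(2)[OF pf P]
      by (auto simp: null_sets_def)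
    then have "A1 \<union> A2 \<in> null_sets P" by auto
    then show "emeasure P (A1 \<union> A2) = 0" by auto
  qed (use A1 A2 in auto)
qed

lemma qs_all:
  assumes pf: "prob_family PP" and ne: "PP \<noteq> {}" and q: "\<And>i::nat. qs PP (Q i)"
  shows "qs PP (\<lambda>w. \<forall>i. Q i w)"
proof -
  have "\<forall>i. \<exists>A. A \<in> sets Omega_borel \<and> cap PP A = 0 \<and> (\<forall>w\<in>Omega - A. Q i w)" using q unfolding qs_def by blast
  then obtain A where A: "\<And>i. A i \<in> sets Omega_borel" "\<And>i. cap PP (A i) = 0" "\<And>i. \<forall>w\<in>Omega - A i. Q i w" by metis
  show ?thesis
  proof (rule qsI0[OF pf ne, of "\<Union>i. A i"])
    show "(\<Union>i. A i) \<in> sets Omega_borel" using A by auto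
    fix P assume P: "P \<in> PP"
    have "A i \<in> null_sets P" for i
      using cap0_null[OF pf P A(1,2)] A(1) PPf(2)[OF pf P] by (auto simp: null_sets_def)
    then have "(\<Union>i. A i) \<in> null_sets P" by (rule null_sets_UN)
    then show "emeasure P (\<Union>i. A i) = 0" by auto
  qed (use A in auto)
qed

lemma ereal_le_eps:
  assumes "\<forall>j::nat. x \<le> ereal (c + 1 / real (Suc j))"
  shows "x \<le> ereal c"
proof (rule ccontr)
  assume "\<not> x \<le> ereal c"
  then have lt: "ereal c < x" by simp
  show False
  proof (cases x)
    case (real r)
    then have "r - c > 0" using lt by simp
    then obtain j where "inverse (real (Suc j)) < r - c" using reals_Archimedean by blast
    moreover have "r \<le> c + 1 / real (Suc j)" using assms real by auto
    ultimately show False by (simp add: field_simps)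
  next
    case PInf then show False using assms by auto
  next
    case MInf then show False using lt by simp
  qed
qed

lemma final_ptwise:
  fixes y z :: "nat \<Rightarrow> real"
  assumes dy: "\<forall>n. y (Suc n) \<le> y n" and dz: "\<forall>n. z (Suc n) \<le> z n"
    and c1: "\<forall>m j. \<exists>n. y n \<le> z m + 1 / real (Suc j)"
    and c2: "\<forall>m j. \<exists>n. z n \<le> y m + 1 / real (Suc j)"
  shows "\<exists>L. (\<lambda>n. ereal (y n)) \<longlonglongrightarrow> L \<and> (\<lambda>n. ereal (z n)) \<longlonglongrightarrow> L"
proof -
  have amy: "antimono (\<lambda>n. ereal (y n))"
  proof (rule antimonoI)
    fix a b :: nat assume "a \<le> b" then show "ereal (y b) \<le> ereal (y a)"
      using lift_Suc_antimono_le[of y, OF _ \<open>a \<le> b\<close>] dy by simp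
  qed
  have amz: "antimono (\<lambda>n. ereal (z n))"
  proof (rule antimonoI)
    fix a b :: nat assume "a \<le> b" then show "ereal (z b) \<le> ereal (z a)"
      using lift_Suc_antimono_le[of z, OF _ \<open>a \<le> b\<close>] dz by simp
  qed
  define Ly where "Ly = (INF n. ereal (y n))"
  define Lz where "Lz = (INF n. ereal (z n))"
  have ly: "(\<lambda>n. ereal (y n)) \<longlonglongrightarrow> Ly" unfolding Ly_def by (rule LIMSEQ_INF[OF amy])
  have lz: "(\<lambda>n. ereal (z n)) \<longlonglongrightarrow> Lz" unfolding Lz_def by (rule LIMSEQ_INF[OF amz])
  have "Ly \<le> ereal (z m)" for m
  proof (rule ereal_le_eps, rule allI)
    fix j
    obtain n where "y n \<le> z m + 1 / real (Suc j)" using c1 by blast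
    moreover have "Ly \<le> ereal (y n)" unfolding Ly_def by (rule INF_lower) simp
    ultimately show "Ly \<le> ereal (z m + 1 / real (Suc j))" by (meson ereal_less_eq(3) order_trans)
  qed
  then have 1: "Ly \<le> Lz" unfolding Lz_def by (intro INF_greatest) auto
  have "Lz \<le> ereal (y m)" for m
  proof (rule ereal_le_eps, rule allI)
    fix j
    obtain n where "z n \<le> y m + 1 / real (Suc j)" using c2 by blast
    moreover have "Lz \<le> ereal (z n)" unfolding Lz_def by (rule INF_lower) simp
    ultimately show "Lz \<le> ereal (y m + 1 / real (Suc j))" by (meson ereal_less_eq(3) order_trans)
  qed
  then have 2: "Lz \<le> Ly" unfolding Ly_def by (intro INF_greatest) auto
  show ?thesis using ly lz 1 2 by (intro exI[of _ Ly]) auto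
qed

lemma ptwise_dini:
  fixes a b :: "nat \<Rightarrow> real"
  assumes da: "\<forall>n. a (Suc n) \<le> a n" and la: "(\<lambda>n. ereal (a n)) \<longlonglongrightarrow> L"
    and db: "\<forall>n. b (Suc n) \<le> b n" and lb: "(\<lambda>n. ereal (b n)) \<longlonglongrightarrow> L"
  shows "(\<forall>n. max (a (Suc n) - b m) 0 \<le> max (a n - b m) 0) \<and> (\<lambda>n. max (a n - b m) 0) \<longlonglongrightarrow> 0"
proof
  show "\<forall>n. max (a (Suc n) - b m) 0 \<le> max (a n - b m) 0"
  proof
    fix n show "max (a (Suc n) - b m) 0 \<le> max (a n - b m) 0" using da[rule_format, of n] by (auto simp: max_def)
  qed
  have "L \<le> ereal (b m)"
  proof (rule LIMSEQ_le_const2[OF lb], intro exI allI impI)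
    fix n assume "m \<le> n"
    then show "ereal (b n) \<le> ereal (b m)" using lift_Suc_antimono_le[of b, OF _ \<open>m \<le> n\<close>] db by simp
  qed
  show "(\<lambda>n. max (a n - b m) 0) \<longlonglongrightarrow> 0"
  proof (rule order_tendstoI)
    fix e :: real assume "e < 0"
    then show "\<forall>\<^sub>F n in sequentially. e < max (a n - b m) 0" by (intro always_eventually allI) auto
  next
    fix e :: real assume e: "0 < e"
    have "L < ereal (b m + e)" 
    proof -
      have "ereal (b m) < ereal (b m + e)" using e by simp
      then show ?thesis using \<open>L \<le> ereal (b m)\<close> by (rule order.strict_trans1[rotated])
    qed
    then have "\<forall>\<^sub>F n in sequentially. ereal (a n) < ereal (b m + e)" by (rule order_tendstoD(2)[OF la])
    then show "\<forall>\<^sub>F n in sequentially. max (a n - b m) 0 < e"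
      by eventually_elim (use e in auto)
  qed
qed

lemma half_dec:
  assumes GS: "G_setting G E PP" and t: "t \<ge> 0"
    and ce: "\<forall>n. cond_exp E PP t (A n) (YA n)" and dq: "decr_qs PP A X"
  shows "qs PP (\<lambda>w. \<forall>n. YA (Suc n) w \<le> YA n w)"
proof -
  have pf: "prob_family PP" using GSet[OF GS] by auto
  have ne: "PP \<noteq> {}" by (rule PP_ne[OF GS])
  have mY: "YA n \<in> borel_measurable Omega_borel" for n using ce unfolding cond_exp_def by blast
  have aeA: "AE w in Q. \<forall>n. A (Suc n) w \<le> A n w" if "Q \<in> PP" for Q
    using qs_AE[OF pf dq[unfolded decr_qs_def] that] by (auto elim: AE_mp)
  have up0: "upE PP (\<lambda>w. ennreal (A (Suc n) w - A n w)) = 0" for n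
  proof -
    have "(\<integral>\<^sup>+w. ennreal (A (Suc n) w - A n w) \<partial>Q) = 0" if Q: "Q \<in> PP" for Q
    proof -
      have "(\<integral>\<^sup>+w. ennreal (A (Suc n) w - A n w) \<partial>Q) = (\<integral>\<^sup>+w. 0 \<partial>Q)"
        using aeA[OF Q] by (intro nn_integral_cong_AE) (auto elim!: AE_mp simp: ennreal_eq_0_iff)
      then show ?thesis by simp
    qed
    then show ?thesis unfolding upE_def using ne by simp
  qed
  show ?thesis
  proof (rule qs_all[OF pf ne])
    fix n
    show "qs PP (\<lambda>w. YA (Suc n) w \<le> YA n w)"
    proof (rule qs_of_AE[OF pf ne])
      note [measurable] = mY
      have "{w \<in> space Omega_borel. YA n w < YA (Suc n) w} \<in> sets Omega_borel"
        by (rule borel_measurable_less[OF mY mY])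
      then have "{w \<in> space Omega_borel. \<not> YA (Suc n) w \<le> YA n w} \<in> sets Omega_borel" by (simp add: not_le)
      then show "{w \<in> Omega. \<not> YA (Suc n) w \<le> YA n w} \<in> sets Omega_borel" by (simp add: space_Omega_borel)
    next
      fix P assume P: "P \<in> PP"
      have mYP: "YA k \<in> borel_measurable P" for k by (rule meas_P[OF pf P mY])
      note [measurable] = mYP
      have "(\<integral>\<^sup>+w. ennreal (YA (Suc n) w - YA n w) \<partial>P) \<le> upE PP (\<lambda>w. ennreal (A (Suc n) w - A n w))"
        using ce by (intro L1_main[OF GS t _ _ P]) auto
      then have "(\<integral>\<^sup>+w. ennreal (YA (Suc n) w - YA n w) \<partial>P) = 0" using up0 by simp
      then have "AE w in P. ennreal (YA (Suc n) w - YA n w) = 0"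
        by (subst nn_integral_0_iff_AE[symmetric]) measurable
      then show "AE w in P. YA (Suc n) w \<le> YA n w" by (auto elim: AE_mp simp: ennreal_eq_0_iff)
    qed
  qed
qed

lemma abs_max_diff: "\<bar>max (x - y) 0 - max (x' - y') 0\<bar> \<le> \<bar>x - x'\<bar> + \<bar>y - y'\<bar>" for x y x' y' :: real
  by (auto simp: max_def abs_if)

lemma half_lim:
  assumes GS: "G_setting G E PP" and t: "t \<ge> 0"
    and ceA: "\<forall>n. cond_exp E PP t (A n) (YA n)" and dA: "decr_qs PP A X" and LA: "\<forall>n. A n \<in> L1G PP {0..}"
    and ceB: "\<forall>n. cond_exp E PP t (B n) (YB n)" and dB: "decr_qs PP B X" and LB: "\<forall>n. B n \<in> L1G PP {0..}"
  shows "qs PP (\<lambda>w. \<forall>m j. \<exists>n. YA n w \<le> YB m w + 1 / real (Suc j))"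
proof -
  have pf: "prob_family PP" using GSet[OF GS] by auto
  have ne: "PP \<noteq> {}" by (rule PP_ne[OF GS])
  have mYA: "YA n \<in> borel_measurable Omega_borel" for n using ceA unfolding cond_exp_def by blast
  have mYB: "YB n \<in> borel_measurable Omega_borel" for n using ceB unfolding cond_exp_def by blast
  have mA: "A n \<in> borel_measurable Omega_borel" for n using LA unfolding L1G_def by blast
  have mB: "B n \<in> borel_measurable Omega_borel" for n using LB unfolding L1G_def by blast
  have "qs PP (\<lambda>w. \<forall>j. \<exists>n. YA n w \<le> YB m w + 1 / real (Suc j))" for m
  proof (rule qs_all[OF pf ne])
    fix j
    define c where "c = 1 / real (Suc j)"
    have c0: "c > 0" unfolding c_def by simp
    define Z where "Z = (\<lambda>n w. max (A n w - B m w) 0)"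
    have dini_res: "(\<lambda>n. upE PP (\<lambda>w. ennreal (Z n w))) \<longlonglongrightarrow> 0"
    proof (rule dini[OF GS])
      show "Z n \<in> borel_measurable Omega_borel" for n unfolding Z_def using mA mB by measurable
      show "Z n w \<ge> 0" for n w unfolding Z_def by simp
    next
      fix n and \<delta> :: real assume d: "\<delta> > 0"
      obtain Ak where Ak: "\<forall>k. Ak k \<in> bLip_cyl {0..}" "(\<lambda>k. upE PP (\<lambda>w. ennreal \<bar>Ak k w - A n w\<bar>)) \<longlonglongrightarrow> 0"
        using LA unfolding L1G_def by blast
      obtain Bk where Bk: "\<forall>k. Bk k \<in> bLip_cyl {0..}" "(\<lambda>k. upE PP (\<lambda>w. ennreal \<bar>Bk k w - B m w\<bar>)) \<longlonglongrightarrow> 0"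
        using LB unfolding L1G_def by blast
      have "(\<lambda>k. upE PP (\<lambda>w. ennreal \<bar>Ak k w - A n w\<bar>) + upE PP (\<lambda>w. ennreal \<bar>Bk k w - B m w\<bar>)) \<longlonglongrightarrow> 0 + 0"
        by (intro tendsto_add Ak(2) Bk(2))
      then have "\<forall>\<^sub>F k in sequentially. upE PP (\<lambda>w. ennreal \<bar>Ak k w - A n w\<bar>) + upE PP (\<lambda>w. ennreal \<bar>Bk k w - B m w\<bar>) < ennreal \<delta>"
        using d by (intro order_tendstoD(2)) auto
      then obtain k where k: "upE PP (\<lambda>w. ennreal \<bar>Ak k w - A n w\<bar>) + upE PP (\<lambda>w. ennreal \<bar>Bk k w - B m w\<bar>) < ennreal \<delta>"
        unfolding eventually_sequentially by blast
      have AkE: "ELp (Ak k)" and BkE: "ELp (Bk k)" using Ak(1) Bk(1) by (auto intro: ELp_bLipI)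
      define C where "C = (\<lambda>w. max (Ak k w - Bk k w) 0)"
      have CE: "ELp C" unfolding C_def by (intro ELp_max0 ELp_diff AkE BkE)
      have "upE PP (\<lambda>w. ennreal \<bar>C w - Z n w\<bar>) \<le> upE PP (\<lambda>w. ennreal \<bar>Ak k w - A n w\<bar>) + upE PP (\<lambda>w. ennreal \<bar>Bk k w - B m w\<bar>)"
        unfolding upE_def[of PP "\<lambda>w. ennreal \<bar>C w - Z n w\<bar>"]
      proof (rule SUP_least)
        fix Q assume Q: "Q \<in> PP"
        note [measurable] = meas_P[OF pf Q mA] meas_P[OF pf Q mB]
          meas_P[OF pf Q ELp_measurable[OF AkE]] meas_P[OF pf Q ELp_measurable[OF BkE]]
        have "(\<integral>\<^sup>+w. ennreal \<bar>C w - Z n w\<bar> \<partial>Q) \<le> (\<integral>\<^sup>+w. ennreal \<bar>Ak k w - A n w\<bar> + ennreal \<bar>Bk k w - B m w\<bar> \<partial>Q)"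
        proof (rule nn_integral_mono)
          fix w
          have "ennreal \<bar>C w - Z n w\<bar> \<le> ennreal (\<bar>Ak k w - A n w\<bar> + \<bar>Bk k w - B m w\<bar>)"
            unfolding C_def Z_def by (rule ennreal_leI, rule abs_max_diff)
          then show "ennreal \<bar>C w - Z n w\<bar> \<le> ennreal \<bar>Ak k w - A n w\<bar> + ennreal \<bar>Bk k w - B m w\<bar>"
            by (simp add: ennreal_plus)
        qed
        also have "\<dots> = (\<integral>\<^sup>+w. ennreal \<bar>Ak k w - A n w\<bar> \<partial>Q) + (\<integral>\<^sup>+w. ennreal \<bar>Bk k w - B m w\<bar> \<partial>Q)"
          by (rule nn_integral_add) measurable
        also have "\<dots> \<le> upE PP (\<lambda>w. ennreal \<bar>Ak k w - A n w\<bar>) + upE PP (\<lambda>w. ennreal \<bar>Bk k w - B m w\<bar>)"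
          by (intro add_mono upE_ge Q)
        finally show "(\<integral>\<^sup>+w. ennreal \<bar>C w - Z n w\<bar> \<partial>Q) \<le> upE PP (\<lambda>w. ennreal \<bar>Ak k w - A n w\<bar>) + upE PP (\<lambda>w. ennreal \<bar>Bk k w - B m w\<bar>)" .
      qed
      then have "upE PP (\<lambda>w. ennreal \<bar>C w - Z n w\<bar>) < ennreal \<delta>" using k by (rule order.strict_trans1)
      moreover have "\<forall>w. C w \<ge> 0" unfolding C_def by simp
      ultimately show "\<exists>C. ELp C \<and> (\<forall>w. C w \<ge> 0) \<and> upE PP (\<lambda>w. ennreal \<bar>C w - Z n w\<bar>) < ennreal \<delta>"
        using CE by blast
    next
      fix P assume P: "P \<in> PP"
      have a1: "AE w in P. (\<forall>n. A (Suc n) w \<le> A n w) \<and> (\<lambda>n. ereal (A n w)) \<longlonglongrightarrow> X w"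
        using qs_AE[OF pf dA[unfolded decr_qs_def] P] .
      have a2: "AE w in P. (\<forall>n. B (Suc n) w \<le> B n w) \<and> (\<lambda>n. ereal (B n w)) \<longlonglongrightarrow> X w"
        using qs_AE[OF pf dB[unfolded decr_qs_def] P] .
      show "AE w in P. (\<forall>n. Z (Suc n) w \<le> Z n w) \<and> (\<lambda>n. Z n w) \<longlonglongrightarrow> 0"
        using a1 a2
      proof eventually_elim
        case (elim w)
        show ?case unfolding Z_def
          using ptwise_dini[of "\<lambda>n. A n w" "X w" "\<lambda>n. B n w" m] elim by blast
      qed
    qed
    have upeq: "upE PP (\<lambda>w. ennreal (Z n w)) = upE PP (\<lambda>w. ennreal (A n w - B m w))" for n
      unfolding Z_def by (simp add: ennreal_max_0')
    define N where "N = {w\<in>Omega. \<forall>n. YB m w + c < YA n w}"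
    have Nm: "N \<in> sets Omega_borel"
    proof -
      note [measurable] = mYA mYB
      have "{w\<in>space Omega_borel. \<forall>n. YB m w + c < YA n w} \<in> sets Omega_borel" by measurable
      then show ?thesis unfolding N_def by (simp add: space_Omega_borel)
    qed
    show "qs PP (\<lambda>w. \<exists>n. YA n w \<le> YB m w + 1 / real (Suc j))"
    proof (rule qsI0[OF pf ne Nm])
      show "\<forall>w\<in>Omega - N. \<exists>n. YA n w \<le> YB m w + 1 / real (Suc j)"
        unfolding N_def c_def by (auto simp: not_less)
    next
      fix P assume P: "P \<in> PP"
      have NP: "N \<in> sets P" using Nm PPf(2)[OF pf P] by simp
      have bound: "ennreal c * emeasure P N \<le> 0 + upE PP (\<lambda>w. ennreal (Z n w))" for n
      proof -
        have "ennreal c * emeasure P N = (\<integral>\<^sup>+w. ennreal c * indicator N w \<partial>P)"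
          by (rule nn_integral_cmult_indicator[OF NP, symmetric])
        also have "\<dots> \<le> (\<integral>\<^sup>+w. ennreal (YA n w - YB m w) \<partial>P)"
        proof (rule nn_integral_mono)
          fix w
          show "ennreal c * indicator N w \<le> ennreal (YA n w - YB m w)"
          proof (cases "w \<in> N")
            case True
            then have "YB m w + c < YA n w" unfolding N_def by blast
            then have "c \<le> YA n w - YB m w" by linarith
            then show ?thesis using True by (simp add: ennreal_leI)
          qed simp
        qed
        also have "\<dots> \<le> upE PP (\<lambda>w. ennreal (A n w - B m w))"
          using ceA ceB by (intro L1_main[OF GS t _ _ P]) auto
        finally show ?thesis using upeq by simp
      qed
      have "ennreal c * emeasure P N \<le> 0" by (rule lim_le[OF allI[OF bound] dini_res])
      then show "emeasure P N = 0" using c0 by (simp add: ennreal_eq_0_iff)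
    qed
  qed
  then show ?thesis by (rule qs_all[OF pf ne])
qed

theorem proposition3p3:
  fixes G :: "real^'d^'d \<Rightarrow> real"
    and E :: "(('d::finite) path \<Rightarrow> real) \<Rightarrow> real"
    and PP :: "'d path measure set"
    and X :: "'d path \<Rightarrow> ereal"
    and Xn Xt Y Yt :: "nat \<Rightarrow> 'd path \<Rightarrow> real"
    and t :: real
  assumes "G_setting G E PP"
    and "X \<in> L1G_star PP"
    and "\<forall>n. Xn n \<in> L1G PP {0..}"
    and "\<forall>n. Xt n \<in> L1G PP {0..}"
    and "decr_qs PP Xn X"
    and "decr_qs PP Xt X"
    and "t \<ge> 0"
    and "\<forall>n. cond_exp E PP t (Xn n) (Y n)"
    and "\<forall>n. cond_exp E PP t (Xt n) (Yt n)"
  shows "qs PP (\<lambda>w. \<exists>L. (\<lambda>n. ereal (Y n w)) \<longlonglongrightarrow> L \<and> (\<lambda>n. ereal (Yt n w)) \<longlonglongrightarrow> L)"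
proof -
  have pf: "prob_family PP" using GSet[OF assms(1)] by auto
  have ne: "PP \<noteq> {}" by (rule PP_ne[OF assms(1)])
  have q1: "qs PP (\<lambda>w. \<forall>n. Y (Suc n) w \<le> Y n w)" by (rule half_dec[OF assms(1) assms(7) assms(8) assms(5)])
  have q2: "qs PP (\<lambda>w. \<forall>n. Yt (Suc n) w \<le> Yt n w)" by (rule half_dec[OF assms(1) assms(7) assms(9) assms(6)])
  have q3: "qs PP (\<lambda>w. \<forall>m j. \<exists>n. Y n w \<le> Yt m w + 1 / real (Suc j))"
    by (rule half_lim[OF assms(1) assms(7) assms(8) assms(5) assms(3) assms(9) assms(6) assms(4)])
  have q4: "qs PP (\<lambda>w. \<forall>m j. \<exists>n. Yt n w \<le> Y m w + 1 / real (Suc j))"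
    by (rule half_lim[OF assms(1) assms(7) assms(9) assms(6) assms(4) assms(8) assms(5) assms(3)])
  have q: "qs PP (\<lambda>w. (\<forall>n. Y (Suc n) w \<le> Y n w) \<and> ((\<forall>n. Yt (Suc n) w \<le> Yt n w) \<and>
      ((\<forall>m j. \<exists>n. Y n w \<le> Yt m w + 1 / real (Suc j)) \<and> (\<forall>m j. \<exists>n. Yt n w \<le> Y m w + 1 / real (Suc j)))))"
    by (intro qs_conj[OF pf ne] q1 q2 q3 q4)
  show ?thesis
  proof (rule qs_mono[OF q], intro ballI impI)
    fix w assume "(\<forall>n. Y (Suc n) w \<le> Y n w) \<and> ((\<forall>n. Yt (Suc n) w \<le> Yt n w) \<and>
      ((\<forall>m j. \<exists>n. Y n w \<le> Yt m w + 1 / real (Suc j)) \<and> (\<forall>m j. \<exists>n. Yt n w \<le> Y m w + 1 / real (Suc j))))"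
    then show "\<exists>L. (\<lambda>n. ereal (Y n w)) \<longlonglongrightarrow> L \<and> (\<lambda>n. ereal (Yt n w)) \<longlonglongrightarrow> L"
      using final_ptwise[of "\<lambda>n. Y n w" "\<lambda>n. Yt n w"] by blast
  qed
qed

end
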